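(* If $\phi\in L^\infty$ is an inner function (in particular $|\phi|=1$ a.e. on $\mathbb{T}$), then $V_\phi^*$ is an isometry on $H^2$.
   Context: $L^2=L^2(\mathbb{T})$ with orthonormal basis $e_n(z)=z^n$, $n\in\mathbb{Z}$; $H^2$ is the closed span of $\{e_n\}_{n\ge0}$, $P:L^2\to H^2$ the orthogonal projection, $M_\phi$ multiplication by $\phi$. $W:L^2\to L^2$: $We_n=e_{n/2}$ for $n$ even, $0$ for $n$ odd. $K:H^2\to L^2$: $Ke_{2n}=e_n$, $Ke_{2n+1}=e_{-n-1}$ ($n\ge0$). The slant H-Toeplitz operator is $V_\phi=WPM_\phi K:H^2\to H^2$. *)

theory Defs
  imports "HOL-Analysis.Analysis"
begin

text \<open>The circle T is parametrised by t in [0, 2 pi] via z = exp(i t); the normalised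
  Lebesgue measure dt/(2 pi) is used.  Elements of L^2 are represented by functions
  (equality a.e. is implicit: all notions below only depend on integrals).\<close>

abbreviation circ :: "real measure" where
  "circ \<equiv> lebesgue_on {0..2*pi}"

definition L2 :: "(real \<Rightarrow> complex) \<Rightarrow> bool" where
  "L2 f \<longleftrightarrow> f \<in> borel_measurable circ \<and> integrable circ (\<lambda>t. (cmod (f t))\<^sup>2)"

definition en :: "int \<Rightarrow> real \<Rightarrow> complex" where
  "en n t = exp (\<i> * of_int n * of_real t)"

definition ip :: "(real \<Rightarrow> complex) \<Rightarrow> (real \<Rightarrow> complex) \<Rightarrow> complex" where
  "ip f g = complex_of_real (1 / (2*pi)) * integral\<^sup>L circ (\<lambda>t. f t * cnj (g t))"

definition fc :: "(real \<Rightarrow> complex) \<Rightarrow> int \<Rightarrow> complex" where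
  "fc f n = ip f (en n)"

definition H2 :: "(real \<Rightarrow> complex) \<Rightarrow> bool" where
  "H2 f \<longleftrightarrow> L2 f \<and> (\<forall>n<0. fc f n = 0)"

text \<open>Inner function: phi in H^infinity (negative Fourier coefficients vanish) with
  unimodular boundary values a.e. on T (hence phi is in L^infinity).\<close>
definition inner_fun :: "(real \<Rightarrow> complex) \<Rightarrow> bool" where
  "inner_fun \<phi> \<longleftrightarrow> \<phi> \<in> borel_measurable circ \<and> (AE t in circ. cmod (\<phi> t) = 1)
     \<and> (\<forall>n<0. fc \<phi> n = 0)"

text \<open>k = K f, with K e_{2n} = e_n, K e_{2n+1} = e_{-n-1}; as a bounded operator this is
  the map on Fourier coefficients below.\<close>
definition is_K :: "(real \<Rightarrow> complex) \<Rightarrow> (real \<Rightarrow> complex) \<Rightarrow> bool" where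
  "is_K f k \<longleftrightarrow> L2 k \<and>
     (\<forall>m. fc k m = (if m \<ge> 0 then fc f (2*m) else fc f (-2*m - 1)))"

text \<open>v = W (P u): P kills negative coefficients, W e_n = e_{n/2} (n even), 0 (n odd).\<close>
definition is_WP :: "(real \<Rightarrow> complex) \<Rightarrow> (real \<Rightarrow> complex) \<Rightarrow> bool" where
  "is_WP u v \<longleftrightarrow> L2 v \<and> (\<forall>n. fc v n = (if n \<ge> 0 then fc u (2*n) else 0))"

text \<open>v = V_phi f = W P M_phi K f.\<close>
definition is_V :: "(real \<Rightarrow> complex) \<Rightarrow> (real \<Rightarrow> complex) \<Rightarrow> (real \<Rightarrow> complex) \<Rightarrow> bool" where
  "is_V \<phi> f v \<longleftrightarrow> (\<exists>k. is_K f k \<and> is_WP (\<lambda>t. \<phi> t * k t) v)"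

definition is_Vadj :: "(real \<Rightarrow> complex) \<Rightarrow> (real \<Rightarrow> complex) \<Rightarrow> (real \<Rightarrow> complex) \<Rightarrow> bool" where
  "is_Vadj \<phi> g h \<longleftrightarrow> H2 h \<and> (\<forall>f v. H2 f \<longrightarrow> is_V \<phi> f v \<longrightarrow> ip v g = ip f h)"

end

theory Submission
  imports Defs
begin


lemma circ_finite: "finite_measure circ"
  by (rule finite_measureI) (simp add: emeasure_restrict_space)

lemma space_circ[simp]: "space circ = {0..2*pi}" by simp

lemma en_alt: "en n t = exp (\<i> * of_real (of_int n * t))"
  unfolding en_def by (simp add: mult.assoc)

lemma cont_en: "continuous_on A (en n)"
  unfolding en_def by (intro continuous_intros)

lemma en_meas[measurable]: "en n \<in> borel_measurable circ"
  by (rule continuous_imp_measurable_on_sets_lebesgue[OF cont_en]) auto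

lemma norm_en[simp]: "cmod (en n t) = 1"
  unfolding en_alt by (rule norm_exp_i_times)

lemma cnj_en: "cnj (en n t) = en (-n) t"
  unfolding en_def by (simp add: exp_cnj)

lemma en_mult: "en m t * en n t = en (m+n) t"
  unfolding en_def by (simp add: exp_add[symmetric] algebra_simps)

lemma en_0[simp]: "en 0 t = 1" unfolding en_def by simp

interpretation circ: finite_measure circ by (rule circ_finite)

lemma integrable_en[simp]: "integrable circ (en n)"
  by (rule continuous_imp_integrable_real[OF cont_en])

lemma integral_en: "integral\<^sup>L circ (en k) = (if k = 0 then 2*pi else 0)"
proof (cases "k = 0")
  case True
  have "en 0 = (\<lambda>t. 1)" by (rule ext) simp
  then show ?thesis using True by (simp add: measure_restrict_space scaleR_conv_of_real)
next
  case False
  define F where "F t = exp (\<i> * of_int k * of_real t) / (\<i> * of_int k)" for t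
  define G where "G z = exp (\<i> * of_int k * z) / (\<i> * of_int k)" for z :: complex
  have d: "(F has_vector_derivative en k t) (at t within {0..2*pi})" for t
  proof -
    have g: "(G has_field_derivative en k t) (at (of_real t) within of_real ` {0..2*pi})"
      unfolding G_def en_def using False
      by (auto intro!: derivative_eq_intros)
    have o: "(complex_of_real has_vector_derivative 1) (at t within {0..2*pi})"
      by (auto intro!: derivative_eq_intros)
    have "(G \<circ> complex_of_real has_vector_derivative 1 * en k t) (at t within {0..2*pi})"
      by (rule field_vector_diff_chain_within[OF o]) (use g in simp)
    moreover have "G \<circ> complex_of_real = F" unfolding G_def F_def by (rule ext) simp
    ultimately show ?thesis by simp
  qed
  have "(en k has_integral (F (2*pi) - F 0)) {0..2*pi}"
    by (rule fundamental_theorem_of_calculus) (use d in auto)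
  moreover have "F (2*pi) = F 0"
  proof -
    have "exp (\<i> * of_int k * of_real (2*pi)) = exp (complex_of_real (2 * of_int k * pi) * \<i>)"
      by (simp add: algebra_simps)
    also have "\<dots> = 1" by (rule exp_integer_2pi) simp
    finally show ?thesis unfolding F_def by simp
  qed
  ultimately have "integral {0..2*pi} (en k) = 0" by (simp add: integral_unique)
  then show ?thesis using False
    by (simp add: lebesgue_integral_eq_integral)
qed

lemma integral_en_cnj: "integral\<^sup>L circ (\<lambda>t. en m t * cnj (en n t)) = (if m = n then 2*pi else 0)"
  by (simp add: cnj_en en_mult integral_en)


lemma borel_measurable_cnj'[measurable]: "f \<in> borel_measurable M \<Longrightarrow> (\<lambda>x. cnj (f x)) \<in> borel_measurable M"
  by (rule borel_measurable_continuous_on[OF continuous_on_cnj[OF continuous_on_id]])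

lemma L2_meas: "L2 f \<Longrightarrow> f \<in> borel_measurable circ"
  unfolding L2_def by simp

lemma L2_sq: "L2 f \<Longrightarrow> integrable circ (\<lambda>t. (cmod (f t))\<^sup>2)"
  unfolding L2_def by simp

lemma L2I: "f \<in> borel_measurable circ \<Longrightarrow> integrable circ (\<lambda>t. (cmod (f t))\<^sup>2) \<Longrightarrow> L2 f"
  unfolding L2_def by simp

lemma norm_le_sq: "(x::real) \<le> 1 + x\<^sup>2"
proof -
  have "0 \<le> (x - 1/2)\<^sup>2" by simp
  then show ?thesis unfolding power2_diff by (simp add: power2_eq_square)
qed

lemma L2_integrable: assumes "L2 f" shows "integrable circ f"
proof (rule Bochner_Integration.integrable_bound)
  show "integrable circ (\<lambda>t. 1 + (cmod (f t))\<^sup>2)"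
    using L2_sq[OF assms] by simp
  show "f \<in> borel_measurable circ" using assms by (rule L2_meas)
  show "AE x in circ. norm (f x) \<le> norm (1 + (cmod (f x))\<^sup>2)"
    by (auto intro!: AE_I2 simp: norm_le_sq)
qed

lemma sq_add_le: "(cmod (a + b))\<^sup>2 \<le> 2 * (cmod a)\<^sup>2 + 2 * (cmod b)\<^sup>2"
proof -
  have "cmod (a+b) \<le> cmod a + cmod b" by (rule norm_triangle_ineq)
  then have "(cmod (a+b))\<^sup>2 \<le> (cmod a + cmod b)\<^sup>2"
    by (simp add: power_mono)
  also have "\<dots> \<le> 2 * (cmod a)\<^sup>2 + 2 * (cmod b)\<^sup>2"
  proof -
    have "0 \<le> (cmod a - cmod b)\<^sup>2" by simp
    then show ?thesis unfolding power2_diff power2_sum by linarith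
  qed
  finally show ?thesis .
qed

lemma L2_add: assumes "L2 f" "L2 g" shows "L2 (\<lambda>t. f t + g t)"
proof (rule L2I)
  show m: "(\<lambda>t. f t + g t) \<in> borel_measurable circ" using L2_meas[OF assms(1)] L2_meas[OF assms(2)] by measurable
  show "integrable circ (\<lambda>t. (cmod (f t + g t))\<^sup>2)"
  proof (rule Bochner_Integration.integrable_bound)
    show "integrable circ (\<lambda>t. 2 * (cmod (f t))\<^sup>2 + 2 * (cmod (g t))\<^sup>2)"
      using L2_sq[OF assms(1)] L2_sq[OF assms(2)] by simp
    show "(\<lambda>t. (cmod (f t + g t))\<^sup>2) \<in> borel_measurable circ" using m by measurable
    show "AE x in circ. norm ((cmod (f x + g x))\<^sup>2) \<le> norm (2 * (cmod (f x))\<^sup>2 + 2 * (cmod (g x))\<^sup>2)"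
      by (rule AE_I2) (use sq_add_le in auto)
  qed
qed

lemma L2_cmult: assumes "L2 f" shows "L2 (\<lambda>t. c * f t)"
proof (rule L2I)
  show "(\<lambda>t. c * f t) \<in> borel_measurable circ" using L2_meas[OF assms(1)] by measurable
  show "integrable circ (\<lambda>t. (cmod (c * f t))\<^sup>2)"
    using L2_sq[OF assms] by (simp add: norm_mult power_mult_distrib)
qed

lemma L2_uminus: assumes "L2 f" shows "L2 (\<lambda>t. - f t)"
  using L2_cmult[OF assms, of "-1"] by simp

lemma L2_diff: assumes "L2 f" "L2 g" shows "L2 (\<lambda>t. f t - g t)"
  using L2_add[OF assms(1) L2_uminus[OF assms(2)]] by simp

lemma L2_zero[simp]: "L2 (\<lambda>t. 0)"
  by (rule L2I) auto

lemma L2_cnj: assumes "L2 f" shows "L2 (\<lambda>t. cnj (f t))"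
  using assms unfolding L2_def by auto

lemma L2_mult_bdd:
  assumes "L2 f" "b \<in> borel_measurable circ" "AE t in circ. cmod (b t) \<le> B"
  shows "L2 (\<lambda>t. b t * f t)"
proof (rule L2I)
  show m: "(\<lambda>t. b t * f t) \<in> borel_measurable circ" using assms(2) L2_meas[OF assms(1)] by measurable
  show "integrable circ (\<lambda>t. (cmod (b t * f t))\<^sup>2)"
  proof (rule Bochner_Integration.integrable_bound)
    show "integrable circ (\<lambda>t. B\<^sup>2 * (cmod (f t))\<^sup>2)"
      using L2_sq[OF assms(1)] by simp
    show "(\<lambda>t. (cmod (b t * f t))\<^sup>2) \<in> borel_measurable circ" using m by measurable
    show "AE x in circ. norm ((cmod (b x * f x))\<^sup>2) \<le> norm (B\<^sup>2 * (cmod (f x))\<^sup>2)"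
      using assms(3)
    proof eventually_elim
      case (elim x)
      have "(cmod (b x))\<^sup>2 \<le> B\<^sup>2" using elim by (simp add: power_mono)
      then have "(cmod (b x))\<^sup>2 * (cmod (f x))\<^sup>2 \<le> B\<^sup>2 * (cmod (f x))\<^sup>2"
        by (simp add: mult_right_mono)
      then show ?case by (simp add: norm_mult power_mult_distrib)
    qed
  qed
qed

lemma L2_bdd:
  assumes "b \<in> borel_measurable circ" "AE t in circ. cmod (b t) \<le> B"
  shows "L2 b"
proof -
  have "L2 (\<lambda>t. 1)" by (rule L2I) auto
  from L2_mult_bdd[OF this assms] show ?thesis by simp
qed

lemma L2_en[simp]: "L2 (en n)"
  by (rule L2_bdd[of _ 1]) auto

lemma L2_sum: "finite F \<Longrightarrow> (\<And>i. i \<in> F \<Longrightarrow> L2 (f i)) \<Longrightarrow> L2 (\<lambda>t. \<Sum>i\<in>F. f i t)"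
  by (induction F rule: finite_induct) (auto intro: L2_add)

lemma prod_le_sq: "cmod (a * cnj b) \<le> ((cmod a)\<^sup>2 + (cmod b)\<^sup>2) / 2"
proof -
  have "0 \<le> (cmod a - cmod b)\<^sup>2" by simp
  then have "2 * (cmod a * cmod b) \<le> (cmod a)\<^sup>2 + (cmod b)\<^sup>2"
    unfolding power2_diff by linarith
  then have "cmod a * cmod b \<le> ((cmod a)\<^sup>2 + (cmod b)\<^sup>2) / 2"
    by (simp add: field_simps)
  then show ?thesis by (simp add: norm_mult)
qed

lemma ip_integrable: assumes "L2 f" "L2 g" shows "integrable circ (\<lambda>t. f t * cnj (g t))"
proof (rule Bochner_Integration.integrable_bound)
  show "integrable circ (\<lambda>t. ((cmod (f t))\<^sup>2 + (cmod (g t))\<^sup>2) / 2)"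
    using L2_sq[OF assms(1)] L2_sq[OF assms(2)] by simp
  show "(\<lambda>t. f t * cnj (g t)) \<in> borel_measurable circ" using L2_meas[OF assms(1)] L2_meas[OF assms(2)] by measurable
  show "AE x in circ. norm (f x * cnj (g x)) \<le> norm (((cmod (f x))\<^sup>2 + (cmod (g x))\<^sup>2) / 2)"
    using prod_le_sq by (auto intro!: AE_I2)
qed

definition n2 :: "(real \<Rightarrow> complex) \<Rightarrow> real" where
  "n2 f = 1 / (2*pi) * integral\<^sup>L circ (\<lambda>t. (cmod (f t))\<^sup>2)"

lemma n2_nonneg: "0 \<le> n2 f"
  unfolding n2_def by (auto intro!: integral_nonneg_AE)

lemma ip_self: "ip f f = of_real (n2 f)"
  unfolding ip_def n2_def by (simp add: complex_norm_square[symmetric] del: of_real_power)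

lemma ip_cnj: "ip g f = cnj (ip f g)"
proof -
  have "(\<lambda>t. g t * cnj (f t)) = (\<lambda>t. cnj (f t * cnj (g t)))" by (auto simp: mult.commute)
  then have "integral\<^sup>L circ (\<lambda>t. g t * cnj (f t)) = cnj (integral\<^sup>L circ (\<lambda>t. f t * cnj (g t)))"
    by (simp only: Bochner_Integration.integral_cnj)
  then show ?thesis unfolding ip_def by simp
qed

lemma ip_add_left: assumes "L2 f" "L2 g" "L2 h"
  shows "ip (\<lambda>t. f t + g t) h = ip f h + ip g h"
  unfolding ip_def using ip_integrable[OF assms(1,3)] ip_integrable[OF assms(2,3)]
  by (simp add: distrib_right distrib_left)

lemma ip_cmult_left: "ip (\<lambda>t. c * f t) g = c * ip f g"
  unfolding ip_def by (simp add: mult.assoc)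

lemma ip_uminus_left: "ip (\<lambda>t. - f t) g = - ip f g"
  using ip_cmult_left[of "-1" f g] by simp

lemma ip_diff_left: assumes "L2 f" "L2 g" "L2 h"
  shows "ip (\<lambda>t. f t - g t) h = ip f h - ip g h"
  using ip_add_left[OF assms(1) L2_uminus[OF assms(2)] assms(3)] ip_uminus_left[of g h] by simp

lemma ip_add_right: assumes "L2 f" "L2 g" "L2 h"
  shows "ip h (\<lambda>t. f t + g t) = ip h f + ip h g"
  by (subst (1 2 3) ip_cnj) (simp add: ip_add_left[OF assms])

lemma ip_cmult_right: "ip f (\<lambda>t. c * g t) = cnj c * ip f g"
  by (subst (1 2) ip_cnj) (simp add: ip_cmult_left)

lemma ip_diff_right: assumes "L2 f" "L2 g" "L2 h"
  shows "ip h (\<lambda>t. f t - g t) = ip h f - ip h g"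
  by (subst (1 2 3) ip_cnj) (simp add: ip_diff_left[OF assms])

lemma ip_sum_left: "finite F \<Longrightarrow> (\<And>i. i \<in> F \<Longrightarrow> L2 (f i)) \<Longrightarrow> L2 h \<Longrightarrow>
   ip (\<lambda>t. \<Sum>i\<in>F. f i t) h = (\<Sum>i\<in>F. ip (f i) h)"
proof (induction F rule: finite_induct)
  case empty
  then show ?case by (simp add: ip_def)
next
  case (insert x F)
  then show ?case by (simp add: ip_add_left L2_sum)
qed

lemma ip_sum_right: "finite F \<Longrightarrow> (\<And>i. i \<in> F \<Longrightarrow> L2 (f i)) \<Longrightarrow> L2 h \<Longrightarrow>
   ip h (\<lambda>t. \<Sum>i\<in>F. f i t) = (\<Sum>i\<in>F. ip h (f i))"
  by (subst ip_cnj) (simp add: ip_sum_left ip_cnj[of h])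

lemma ip_en_en: "ip (en m) (en n) = (if m = n then 1 else 0)"
  unfolding ip_def by (simp add: integral_en_cnj)

lemma fc_en: "fc (en m) n = (if m = n then 1 else 0)"
  unfolding fc_def by (rule ip_en_en)

lemma fc_add: "L2 f \<Longrightarrow> L2 g \<Longrightarrow> fc (\<lambda>t. f t + g t) n = fc f n + fc g n"
  unfolding fc_def by (simp add: ip_add_left)

lemma fc_diff: "L2 f \<Longrightarrow> L2 g \<Longrightarrow> fc (\<lambda>t. f t - g t) n = fc f n - fc g n"
  unfolding fc_def by (simp add: ip_diff_left)

lemma fc_cmult: "fc (\<lambda>t. c * f t) n = c * fc f n"
  unfolding fc_def by (simp add: ip_cmult_left)

lemma fc_sum: "finite F \<Longrightarrow> (\<And>i. i \<in> F \<Longrightarrow> L2 (f i)) \<Longrightarrow>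
   fc (\<lambda>t. \<Sum>i\<in>F. f i t) n = (\<Sum>i\<in>F. fc (f i) n)"
  unfolding fc_def by (simp add: ip_sum_left)

lemma ip_en_left: "ip (en n) h = cnj (fc h n)"
  unfolding fc_def by (simp add: ip_cnj[of h])



section \<open>Cauchy-Schwarz\<close>

lemma amgm_t: fixes a b t :: real assumes "t > 0" shows "a * b \<le> (t * a\<^sup>2 + b\<^sup>2 / t) / 2"
proof -
  have "0 \<le> (t * a - b)\<^sup>2" by simp
  then have h: "2 * t * (a * b) \<le> t\<^sup>2 * a\<^sup>2 + b\<^sup>2"
    unfolding power2_diff by (simp add: power_mult_distrib algebra_simps)
  have eq: "(t * a\<^sup>2 + b\<^sup>2 / t) / 2 = (t\<^sup>2 * a\<^sup>2 + b\<^sup>2) / (2 * t)"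
    using assms by (simp add: field_simps power2_eq_square)
  show ?thesis unfolding eq using assms h by (simp add: pos_le_divide_eq mult.commute mult.left_commute)
qed

lemma cs_real:
  fixes x A B :: real
  assumes "0 \<le> x" "0 \<le> A" "0 \<le> B" "\<And>t. t > 0 \<Longrightarrow> x \<le> (t * A + B / t) / 2"
  shows "x\<^sup>2 \<le> A * B"
proof (cases "A > 0 \<and> B > 0")
  case True
  define t where "t = sqrt (B / A)"
  have t: "t > 0" using True by (simp add: t_def)
  have "t * A = sqrt (A * B)" using True
    by (simp add: t_def real_sqrt_divide field_simps real_sqrt_mult)
  moreover have "B / t = sqrt (A * B)" using True
    by (simp add: t_def real_sqrt_divide field_simps real_sqrt_mult)
  ultimately have "x \<le> sqrt (A * B)" using assms(4)[OF t] by simp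
  then have "x\<^sup>2 \<le> (sqrt (A * B))\<^sup>2" using assms(1) by (simp add: power_mono)
  then show ?thesis using True by simp
next
  case False
  have "x = 0"
  proof (rule ccontr)
    assume "x \<noteq> 0"
    then have xp: "x > 0" using assms(1) by simp
    show False
    proof (cases "A = 0")
      case True
      define t where "t = (B + 1) / x"
      have t: "t > 0" using xp assms(3) by (simp add: t_def)
      have "x \<le> B / t / 2" using assms(4)[OF t] True by simp
      also have "\<dots> = B * x / (2 * (B + 1))" using xp assms(3) by (simp add: t_def field_simps)
      also have "\<dots> < x"
      proof -
        have h1: "0 \<le> B * x" using xp assms(3) by simp
        have "x * (2 * (B + 1)) = 2 * (B * x) + 2 * x" by (simp add: algebra_simps)
        then have "B * x < x * (2 * (B + 1))" using h1 xp by linarith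
        then show ?thesis using assms(3) by (simp add: divide_less_eq)
      qed
      finally show False by simp
    next
      case False
      then have B0: "B = 0" using \<open>\<not> (A > 0 \<and> B > 0)\<close> assms(2,3) by auto
      define t where "t = x / (A + 1)"
      have t: "t > 0" using xp assms(2) by (simp add: t_def)
      have "x \<le> t * A / 2" using assms(4)[OF t] B0 by simp
      also have "\<dots> = x * A / (2 * (A + 1))" using xp assms(2) by (simp add: t_def field_simps)
      also have "\<dots> < x"
      proof -
        have h1: "0 \<le> x * A" using xp assms(2) by simp
        have "x * (2 * (A + 1)) = 2 * (x * A) + 2 * x" by (simp add: algebra_simps)
        then have "x * A < x * (2 * (A + 1))" using h1 xp by linarith
        then show ?thesis using assms(2) by (simp add: divide_less_eq)
      qed
      finally show False by simp
    qed
  qed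
  then show ?thesis using assms by simp
qed

lemma ip_bound_t:
  assumes "L2 f" "L2 g" "t > 0"
  shows "cmod (ip f g) \<le> (t * n2 f + n2 g / t) / 2"
proof -
  have "cmod (integral\<^sup>L circ (\<lambda>x. f x * cnj (g x))) \<le> integral\<^sup>L circ (\<lambda>x. norm (f x * cnj (g x)))"
    by (rule integral_norm_bound)
  also have "\<dots> \<le> integral\<^sup>L circ (\<lambda>x. (t * (cmod (f x))\<^sup>2 + (cmod (g x))\<^sup>2 / t) / 2)"
  proof (rule integral_mono)
    show "integrable circ (\<lambda>x. norm (f x * cnj (g x)))"
      using ip_integrable[OF assms(1,2)] by simp
    show "integrable circ (\<lambda>x. (t * (cmod (f x))\<^sup>2 + (cmod (g x))\<^sup>2 / t) / 2)"
      using L2_sq[OF assms(1)] L2_sq[OF assms(2)] by simp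
    show "norm (f x * cnj (g x)) \<le> (t * (cmod (f x))\<^sup>2 + (cmod (g x))\<^sup>2 / t) / 2" for x
      using amgm_t[OF assms(3), of "cmod (f x)" "cmod (g x)"] by (simp add: norm_mult)
  qed
  also have "\<dots> = (t * integral\<^sup>L circ (\<lambda>x. (cmod (f x))\<^sup>2) + integral\<^sup>L circ (\<lambda>x. (cmod (g x))\<^sup>2) / t) / 2"
    using L2_sq[OF assms(1)] L2_sq[OF assms(2)] by simp
  finally have *: "cmod (integral\<^sup>L circ (\<lambda>x. f x * cnj (g x))) \<le> \<dots>" .
  have "cmod (ip f g) = cmod (integral\<^sup>L circ (\<lambda>x. f x * cnj (g x))) / (2*pi)"
    unfolding ip_def by (simp add: norm_divide)
  also have "\<dots> \<le> (t * integral\<^sup>L circ (\<lambda>x. (cmod (f x))\<^sup>2) + integral\<^sup>L circ (\<lambda>x. (cmod (g x))\<^sup>2) / t) / 2 / (2*pi)"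
    by (rule divide_right_mono[OF *]) simp
  also have "\<dots> = (t * n2 f + n2 g / t) / 2"
    unfolding n2_def by (simp add: field_simps)
  finally show ?thesis .
qed

lemma cauchy_schwarz:
  assumes "L2 f" "L2 g"
  shows "(cmod (ip f g))\<^sup>2 \<le> n2 f * n2 g"
  by (rule cs_real) (use ip_bound_t[OF assms] n2_nonneg in auto)

lemma cauchy_schwarz':
  assumes "L2 f" "L2 g"
  shows "cmod (ip f g) \<le> sqrt (n2 f) * sqrt (n2 g)"
proof -
  have "cmod (ip f g) = sqrt ((cmod (ip f g))\<^sup>2)" by simp
  also have "\<dots> \<le> sqrt (n2 f * n2 g)" using cauchy_schwarz[OF assms] by (rule real_sqrt_le_mono)
  finally show ?thesis by (simp add: real_sqrt_mult)
qed

lemma n2_ip: "n2 f = Re (ip f f)"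
  by (simp add: ip_self)


abbreviation IN :: "nat \<Rightarrow> int set" where "IN N \<equiv> {- int N .. int N}"

definition psum :: "(int \<Rightarrow> complex) \<Rightarrow> nat \<Rightarrow> real \<Rightarrow> complex" where
  "psum c N = (\<lambda>t. \<Sum>n\<in>IN N. c n * en n t)"

lemma L2_psum[simp]: "L2 (psum c N)"
  unfolding psum_def by (rule L2_sum) (auto intro: L2_cmult)

lemma ip_psum_left: "L2 f \<Longrightarrow> ip (psum c N) f = (\<Sum>n\<in>IN N. c n * ip (en n) f)"
  unfolding psum_def by (subst ip_sum_left) (auto intro: L2_cmult simp: ip_cmult_left)

lemma ip_psum_right: "L2 f \<Longrightarrow> ip f (psum c N) = (\<Sum>n\<in>IN N. cnj (c n) * fc f n)"
  unfolding psum_def fc_def by (subst ip_sum_right) (auto intro: L2_cmult simp: ip_cmult_right)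

lemma fc_psum: "fc (psum c N) m = (if m \<in> IN N then c m else 0)"
proof -
  have "fc (psum c N) m = (\<Sum>n\<in>IN N. c n * (if n = m then 1 else 0))"
    unfolding fc_def by (simp add: ip_psum_left ip_en_en)
  also have "\<dots> = (\<Sum>n\<in>IN N. if n = m then c n else 0)"
    by (rule sum.cong) auto
  also have "\<dots> = (if m \<in> IN N then c m else 0)"
    by (simp add: sum.delta')
  finally show ?thesis .
qed

lemma ip_psum_psum: "ip (psum c N) (psum d N) = (\<Sum>n\<in>IN N. c n * cnj (d n))"
proof -
  have "ip (psum c N) (psum d N) = (\<Sum>n\<in>IN N. c n * cnj (fc (psum d N) n))"
    by (simp add: ip_psum_left ip_en_left)
  also have "\<dots> = (\<Sum>n\<in>IN N. c n * cnj (d n))"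
    by (rule sum.cong) (auto simp: fc_psum)
  finally show ?thesis .
qed

lemma n2_psum: "n2 (psum c N) = (\<Sum>n\<in>IN N. (cmod (c n))\<^sup>2)"
proof -
  have "complex_of_real (n2 (psum c N)) = (\<Sum>n\<in>IN N. c n * cnj (c n))"
    by (simp add: ip_self[symmetric] ip_psum_psum)
  also have "\<dots> = complex_of_real (\<Sum>n\<in>IN N. (cmod (c n))\<^sup>2)"
    by (simp add: complex_norm_square del: of_real_power)
  finally show ?thesis by (simp only: of_real_eq_iff)
qed

lemma psum_diff: "M \<le> N \<Longrightarrow> (\<lambda>t. psum c N t - psum c M t) = psum (\<lambda>n. if n \<in> IN M then 0 else c n) N"
proof (rule ext)
  fix t assume "M \<le> N"
  then have sub: "IN M \<subseteq> IN N" by auto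
  have "psum c N t = (\<Sum>n\<in>IN N - IN M. c n * en n t) + psum c M t"
    unfolding psum_def using sum.subset_diff[OF sub, of "\<lambda>n. c n * en n t"] by simp
  moreover have "psum (\<lambda>n. if n \<in> IN M then 0 else c n) N t = (\<Sum>n\<in>IN N - IN M. c n * en n t)"
  proof -
    have "psum (\<lambda>n. if n \<in> IN M then 0 else c n) N t = (\<Sum>n\<in>IN N. if n \<in> IN N - IN M then c n * en n t else 0)"
      unfolding psum_def by (rule sum.cong) auto
    also have "\<dots> = (\<Sum>n\<in>IN N \<inter> (IN N - IN M). c n * en n t)"
      by (rule sum.inter_restrict[symmetric]) simp
    also have "\<dots> = (\<Sum>n\<in>IN N - IN M. c n * en n t)" by (rule sum.cong) auto
    finally show ?thesis .
  qed
  ultimately show "psum c N t - psum c M t = psum (\<lambda>n. if n \<in> IN M then 0 else c n) N t" by simp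
qed

lemma n2_psum_diff: "M \<le> N \<Longrightarrow> n2 (\<lambda>t. psum c N t - psum c M t) = (\<Sum>n\<in>IN N. (cmod (c n))\<^sup>2) - (\<Sum>n\<in>IN M. (cmod (c n))\<^sup>2)"
proof -
  assume MN: "M \<le> N"
  then have sub: "IN M \<subseteq> IN N" by auto
  have "n2 (\<lambda>t. psum c N t - psum c M t) = (\<Sum>n\<in>IN N. (cmod (if n \<in> IN M then 0 else c n))\<^sup>2)"
    by (simp only: psum_diff[OF MN] n2_psum)
  also have "\<dots> = (\<Sum>n\<in>IN N. if n \<in> IN N - IN M then (cmod (c n))\<^sup>2 else 0)"
    by (rule sum.cong) auto
  also have "\<dots> = (\<Sum>n\<in>IN N \<inter> (IN N - IN M). (cmod (c n))\<^sup>2)"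
    by (rule sum.inter_restrict[symmetric]) simp
  also have "\<dots> = (\<Sum>n\<in>IN N - IN M. (cmod (c n))\<^sup>2)" by (rule sum.cong) auto
  also have "\<dots> = (\<Sum>n\<in>IN N. (cmod (c n))\<^sup>2) - (\<Sum>n\<in>IN M. (cmod (c n))\<^sup>2)"
    using sum.subset_diff[OF sub, of "\<lambda>n. (cmod (c n))\<^sup>2"] by simp
  finally show ?thesis .
qed

lemma bessel_eq:
  assumes f: "L2 f"
  shows "n2 (\<lambda>t. f t - psum (fc f) N t) = n2 f - (\<Sum>n\<in>IN N. (cmod (fc f n))\<^sup>2)"
proof -
  let ?S = "psum (fc f) N"
  let ?s = "(\<Sum>n\<in>IN N. (cmod (fc f n))\<^sup>2)"
  have a: "ip f ?S = of_real ?s"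
    using f by (simp add: ip_psum_right complex_norm_square mult.commute del: of_real_power)
  have b: "ip ?S f = of_real ?s"
    using a by (subst ip_cnj) simp
  have c: "ip ?S ?S = of_real ?s"
    by (simp add: ip_psum_psum complex_norm_square del: of_real_power)
  have "complex_of_real (n2 (\<lambda>t. f t - ?S t)) = ip (\<lambda>t. f t - ?S t) (\<lambda>t. f t - ?S t)"
    by (simp add: ip_self)
  also have "\<dots> = ip f f - ip f ?S - (ip ?S f - ip ?S ?S)"
    using f by (simp add: ip_diff_left ip_diff_right L2_diff)
  also have "\<dots> = of_real (n2 f - ?s)"
    using a b c by (simp add: ip_self)
  finally show ?thesis by (simp only: of_real_eq_iff)
qed

lemma bessel_ineq:
  assumes f: "L2 f"
  shows "(\<Sum>n\<in>IN N. (cmod (fc f n))\<^sup>2) \<le> n2 f"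
  using bessel_eq[OF f, of N] n2_nonneg[of "\<lambda>t. f t - psum (fc f) N t"] by linarith

lemma finite_sub_IN: "finite X \<Longrightarrow> \<exists>K. X \<subseteq> IN K"
proof (induction X rule: finite_induct)
  case empty
  then show ?case by simp
next
  case (insert x F)
  then obtain K where K: "F \<subseteq> IN K" by blast
  have "insert x F \<subseteq> IN (max K (nat \<bar>x\<bar>))"
  proof
    fix y assume "y \<in> insert x F"
    then consider "y = x" | "y \<in> IN K" using K by blast
    then show "y \<in> IN (max K (nat \<bar>x\<bar>))"
    proof cases
      case 1
      then show ?thesis by (simp add: of_nat_max) linarith
    next
      case 2
      then show ?thesis by (simp add: of_nat_max) linarith
    qed
  qed
  then show ?case by blast
qed

lemma IN_mono: "K \<le> N \<Longrightarrow> IN K \<subseteq> IN N"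
  by auto

lemma filterlim_IN: "filterlim IN (finite_subsets_at_top UNIV) sequentially"
proof -
  have "\<forall>\<^sub>F N in sequentially. P (IN N)" if ev: "eventually P (finite_subsets_at_top UNIV)" for P
  proof -
    from ev obtain X where X: "finite X" "\<And>Y. finite Y \<Longrightarrow> X \<subseteq> Y \<Longrightarrow> P Y"
      unfolding eventually_finite_subsets_at_top by auto
    obtain K where K: "X \<subseteq> IN K" using finite_sub_IN[OF X(1)] by blast
    show ?thesis
    proof (rule eventually_sequentiallyI[of K])
      fix N assume "K \<le> N"
      then have "X \<subseteq> IN N" using K IN_mono by blast
      then show "P (IN N)" using X(2) by simp
    qed
  qed
  then show ?thesis unfolding filterlim_def le_filter_def eventually_filtermap by auto
qed

lemma has_sum_IN:
  assumes "(f has_sum s) (UNIV :: int set)"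
  shows "(\<lambda>N. \<Sum>n\<in>IN N. f n) \<longlonglongrightarrow> s"
proof -
  have "(sum f \<longlongrightarrow> s) (finite_subsets_at_top UNIV)" using assms by (simp add: has_sum_def)
  from filterlim_compose[OF this filterlim_IN] show ?thesis by (simp add: o_def)
qed

lemma has_sum_from_IN:
  fixes f :: "int \<Rightarrow> 'a::{banach}"
  assumes "f summable_on UNIV" "(\<lambda>N. \<Sum>n\<in>IN N. f n) \<longlonglongrightarrow> s"
  shows "(f has_sum s) UNIV"
proof -
  have "(f has_sum infsum f UNIV) UNIV" using assms(1) by simp
  then have "(\<lambda>N. \<Sum>n\<in>IN N. f n) \<longlonglongrightarrow> infsum f UNIV" by (rule has_sum_IN)
  then have "s = infsum f UNIV" using assms(2) LIMSEQ_unique by blast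
  then show ?thesis using assms(1) by simp
qed

lemma sq_summable_bessel:
  assumes "L2 f"
  shows "(\<lambda>n. (cmod (fc f n))\<^sup>2) summable_on UNIV"
proof (rule nonneg_bdd_above_summable_on)
  show "bdd_above (sum (\<lambda>n. (cmod (fc f n))\<^sup>2) ` {F. F \<subseteq> UNIV \<and> finite F})"
  proof (rule bdd_aboveI2)
    fix F :: "int set" assume "F \<in> {F. F \<subseteq> UNIV \<and> finite F}"
    then have F: "finite F" by simp
    obtain K where "F \<subseteq> IN K" using finite_sub_IN[OF F] by blast
    then have "(\<Sum>n\<in>F. (cmod (fc f n))\<^sup>2) \<le> (\<Sum>n\<in>IN K. (cmod (fc f n))\<^sup>2)"
      by (intro sum_mono2) auto
    also have "\<dots> \<le> n2 f" by (rule bessel_ineq[OF assms])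
    finally show "(\<Sum>n\<in>F. (cmod (fc f n))\<^sup>2) \<le> n2 f" .
  qed
qed simp



section \<open>Riesz-Fischer\<close>

lemma integral_circ_const: "integral\<^sup>L circ (\<lambda>x. c) = 2 * pi * (c::real)"
  by (simp add: measure_restrict_space)

lemma L1_bound:
  assumes f: "L2 f"
  shows "integral\<^sup>L circ (\<lambda>x. norm (f x)) \<le> 2 * pi * sqrt (n2 f)"
proof -
  let ?x = "integral\<^sup>L circ (\<lambda>x. norm (f x))"
  let ?A = "integral\<^sup>L circ (\<lambda>x. (cmod (f x))\<^sup>2)"
  have "?x\<^sup>2 \<le> ?A * (2*pi)"
  proof (rule cs_real)
    show "0 \<le> ?x" by (auto intro!: integral_nonneg_AE)
    show "0 \<le> ?A" by (auto intro!: integral_nonneg_AE)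
    show "0 \<le> 2 * pi" by simp
    fix t :: real assume t: "t > 0"
    have "?x \<le> integral\<^sup>L circ (\<lambda>x. (t * (cmod (f x))\<^sup>2 + 1\<^sup>2 / t) / 2)"
    proof (rule integral_mono)
      show "integrable circ (\<lambda>x. norm (f x))" using L2_integrable[OF f] by simp
      show "integrable circ (\<lambda>x. (t * (cmod (f x))\<^sup>2 + 1\<^sup>2 / t) / 2)"
        using L2_sq[OF f] by simp
      show "norm (f x) \<le> (t * (cmod (f x))\<^sup>2 + 1\<^sup>2 / t) / 2" for x
        using amgm_t[OF t, of "cmod (f x)" 1] by simp
    qed
    also have "\<dots> = (t * ?A + 2 * pi / t) / 2"
      using L2_sq[OF f] by (simp add: integral_circ_const measure_restrict_space)
    finally show "?x \<le> (t * ?A + 2 * pi / t) / 2" .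
  qed
  then have "?x \<le> sqrt (?A * (2*pi))"
    using real_le_rsqrt by blast
  also have "?A * (2*pi) = (2*pi)\<^sup>2 * n2 f"
    unfolding n2_def by (simp add: power2_eq_square)
  also have "sqrt \<dots> = 2 * pi * sqrt (n2 f)"
    by (simp add: real_sqrt_mult)
  finally show ?thesis .
qed

lemma fatou_L2:
  assumes s: "\<And>k. L2 (s k)" and g: "L2 g"
    and lim: "AE x in circ. (\<lambda>k. s k x) \<longlonglongrightarrow> w x"
    and wm: "w \<in> borel_measurable circ"
    and bnd: "eventually (\<lambda>k. n2 (\<lambda>t. s k t - g t) \<le> B) sequentially"
  shows "L2 w" "n2 (\<lambda>t. w t - g t) \<le> B"
proof -
  have B: "0 \<le> B"
  proof -
    from bnd obtain k where "n2 (\<lambda>t. s k t - g t) \<le> B" by (auto dest: eventually_happens)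
    then show ?thesis using n2_nonneg order_trans by blast
  qed
  have gm: "g \<in> borel_measurable circ" using g by (rule L2_meas)
  have sm: "s k \<in> borel_measurable circ" for k using s by (rule L2_meas)
  define F where "F k x = ennreal ((cmod (s k x - g x))\<^sup>2)" for k x
  have Fm: "F k \<in> borel_measurable circ" for k
    unfolding F_def using sm gm by measurable
  have "AE x in circ. ennreal ((cmod (w x - g x))\<^sup>2) = liminf (\<lambda>k. F k x)"
    using lim
  proof eventually_elim
    case (elim x)
    then have t: "(\<lambda>k. ennreal ((cmod (s k x - g x))\<^sup>2)) \<longlonglongrightarrow> ennreal ((cmod (w x - g x))\<^sup>2)"
      by (intro tendsto_ennrealI tendsto_intros)
    show ?case unfolding F_def using lim_imp_Liminf[OF _ t] by simp
  qed
  then have "(\<integral>\<^sup>+x. ennreal ((cmod (w x - g x))\<^sup>2) \<partial>circ) = (\<integral>\<^sup>+x. liminf (\<lambda>k. F k x) \<partial>circ)"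
    by (rule nn_integral_cong_AE)
  also have "\<dots> \<le> liminf (\<lambda>k. integral\<^sup>N circ (F k))"
    by (rule nn_integral_liminf[OF Fm])
  also have "\<dots> \<le> ennreal (2 * pi * B)"
  proof -
    have "eventually (\<lambda>k. integral\<^sup>N circ (F k) \<le> ennreal (2 * pi * B)) sequentially"
      using bnd
    proof eventually_elim
      case (elim k)
      have L: "L2 (\<lambda>t. s k t - g t)" using s g by (rule L2_diff)
      have "integral\<^sup>N circ (F k) = ennreal (integral\<^sup>L circ (\<lambda>x. (cmod (s k x - g x))\<^sup>2))"
        unfolding F_def by (rule nn_integral_eq_integral) (use L2_sq[OF L] in auto)
      also have "integral\<^sup>L circ (\<lambda>x. (cmod (s k x - g x))\<^sup>2) = 2 * pi * n2 (\<lambda>t. s k t - g t)"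
        unfolding n2_def by simp
      also have "\<dots> \<le> 2 * pi * B" using elim by simp
      finally show ?case by (simp add: ennreal_leI)
    qed
    then have "limsup (\<lambda>k. integral\<^sup>N circ (F k)) \<le> ennreal (2 * pi * B)"
      by (rule Limsup_bounded)
    then show ?thesis using Liminf_le_Limsup[of sequentially] order_trans by fastforce
  qed
  finally have fin: "(\<integral>\<^sup>+x. ennreal ((cmod (w x - g x))\<^sup>2) \<partial>circ) \<le> ennreal (2 * pi * B)" .
  have wgm: "(\<lambda>x. w x - g x) \<in> borel_measurable circ" using wm gm by measurable
  have int: "integrable circ (\<lambda>x. (cmod (w x - g x))\<^sup>2)"
  proof (rule integrableI_bounded)
    show "(\<lambda>x. (cmod (w x - g x))\<^sup>2) \<in> borel_measurable circ" using wgm by measurable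
    show "(\<integral>\<^sup>+x. ennreal (norm ((cmod (w x - g x))\<^sup>2)) \<partial>circ) < \<infinity>"
      using fin by (simp add: order_le_less_trans)
  qed
  have L: "L2 (\<lambda>x. w x - g x)" using wgm int by (rule L2I)
  have "L2 (\<lambda>x. (w x - g x) + g x)" using L g by (rule L2_add)
  then show "L2 w" by simp
  have "ennreal (integral\<^sup>L circ (\<lambda>x. (cmod (w x - g x))\<^sup>2)) \<le> ennreal (2 * pi * B)"
    using fin by (subst nn_integral_eq_integral[symmetric]) (use int in auto)
  then have "integral\<^sup>L circ (\<lambda>x. (cmod (w x - g x))\<^sup>2) \<le> 2 * pi * B"
    using B by (simp add: ennreal_le_iff)
  then show "n2 (\<lambda>t. w t - g t) \<le> B"
    unfolding n2_def by (simp add: field_simps)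
qed


lemma n2_minus_commute: "n2 (\<lambda>t. f t - g t) = n2 (\<lambda>t. g t - f t)"
  unfolding n2_def by (simp add: norm_minus_commute)

lemma n2_en[simp]: "n2 (en m) = 1"
  using ip_self[of "en m"] ip_en_en[of m m] by simp

lemma fc_bound: "L2 h \<Longrightarrow> cmod (fc h m) \<le> sqrt (n2 h)"
  unfolding fc_def using cauchy_schwarz'[of h "en m"] by simp

theorem riesz_fischer:
  assumes sq: "(\<lambda>n. (cmod (c n))\<^sup>2) summable_on UNIV"
  obtains w where "L2 w" "\<And>n. fc w n = c n" "(\<lambda>N. n2 (\<lambda>t. w t - psum c N t)) \<longlonglongrightarrow> 0"
proof -
  define P where "P N = (\<Sum>n\<in>IN N. (cmod (c n))\<^sup>2)" for N
  define L where "L = infsum (\<lambda>n. (cmod (c n))\<^sup>2) UNIV"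
  have PL: "P \<longlonglongrightarrow> L"
    using has_sum_IN[OF has_sum_infsum[OF sq]] unfolding P_def L_def by simp
  have Pmono: "P M \<le> P N" if "M \<le> N" for M N
    unfolding P_def by (rule sum_mono2) (use that in auto)
  have incP: "incseq P" using Pmono by (simp add: incseq_def)
  have PleL: "P N \<le> L" for N using incseq_le[OF incP PL] .
  have n2d: "n2 (\<lambda>t. psum c N t - psum c M t) = P N - P M" if "M \<le> N" for M N
    unfolding P_def by (rule n2_psum_diff[OF that])
  have n2d': "n2 (\<lambda>t. psum c i t - psum c j t) = \<bar>P i - P j\<bar>" for i j
  proof (cases "j \<le> i")
    case True
    then show ?thesis using n2d[OF True] Pmono[OF True] by simp
  next
    case False
    then have "i \<le> j" by simp
    then show ?thesis using n2d[of i j] Pmono[of i j] n2_minus_commute[of "psum c i" "psum c j"] by simp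
  qed
  have CP: "Cauchy P" using PL by (rule LIMSEQ_imp_Cauchy)
  have L1C: "\<exists>N. \<forall>i\<ge>N. \<forall>j\<ge>N. (LINT x|circ. norm (psum c i x - psum c j x)) < e" if e: "e > 0" for e
  proof -
    define e' where "e' = (e / (2*pi))\<^sup>2"
    have e': "e' > 0" using e by (simp add: e'_def)
    obtain M where M: "\<And>m n. m \<ge> M \<Longrightarrow> n \<ge> M \<Longrightarrow> dist (P m) (P n) < e'"
      using metric_CauchyD[OF CP e'] by blast
    show ?thesis
    proof (intro exI allI impI)
      fix i j assume ij: "i \<ge> M" "j \<ge> M"
      have "(LINT x|circ. norm (psum c i x - psum c j x)) \<le> 2 * pi * sqrt (n2 (\<lambda>t. psum c i t - psum c j t))"
        by (rule L1_bound) (auto intro: L2_diff)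
      also have "\<dots> < 2 * pi * sqrt e'"
        using M[OF ij] by (simp add: n2d' dist_real_def)
      also have "\<dots> = e" using e by (simp add: e'_def)
      finally show "(LINT x|circ. norm (psum c i x - psum c j x)) < e" .
    qed
  qed
  have intg: "integrable circ (psum c k)" for k by (rule L2_integrable) simp
  obtain r where r: "strict_mono r" and ae: "AE x in circ. Cauchy (\<lambda>i. psum c (r i) x)"
    using cauchy_L1_AE_cauchy_subseq[OF intg L1C] by blast
  define w where "w x = lim (\<lambda>i. psum c (r i) x)" for x
  have psm: "psum c k \<in> borel_measurable circ" for k by (rule L2_meas) simp
  have wm: "w \<in> borel_measurable circ"
    unfolding w_def using psm by measurable
  have lim: "AE x in circ. (\<lambda>k. psum c (r k) x) \<longlonglongrightarrow> w x"
    using ae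
  proof eventually_elim
    case (elim x)
    then have "convergent (\<lambda>i. psum c (r i) x)" by (simp add: Cauchy_convergent_iff)
    then show ?case unfolding w_def by (simp add: convergent_LIMSEQ_iff)
  qed
  have main: "L2 w \<and> n2 (\<lambda>t. w t - psum c n t) \<le> L - P n" for n
  proof -
    have ev: "eventually (\<lambda>k. n2 (\<lambda>t. psum c (r k) t - psum c n t) \<le> L - P n) sequentially"
    proof (rule eventually_sequentiallyI[of n])
      fix k assume "n \<le> k"
      then have "n \<le> r k" using seq_suble[OF r, of k] by simp
      then show "n2 (\<lambda>t. psum c (r k) t - psum c n t) \<le> L - P n"
        using n2d[of n "r k"] PleL[of "r k"] by simp
    qed
    show ?thesis using fatou_L2[of "\<lambda>k. psum c (r k)" "psum c n" w, OF _ _ lim wm ev] by simp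
  qed
  have Lw: "L2 w" using main by blast
  have lim0: "(\<lambda>N. L - P N) \<longlonglongrightarrow> 0"
    using tendsto_diff[OF tendsto_const[of L] PL] by simp
  have conv: "(\<lambda>N. n2 (\<lambda>t. w t - psum c N t)) \<longlonglongrightarrow> 0"
  proof (rule real_tendsto_sandwich[OF _ _ tendsto_const lim0])
    show "\<forall>\<^sub>F n in sequentially. 0 \<le> n2 (\<lambda>t. w t - psum c n t)" by (simp add: n2_nonneg)
    show "\<forall>\<^sub>F n in sequentially. n2 (\<lambda>t. w t - psum c n t) \<le> L - P n" using main by simp
  qed
  have fcw: "fc w m = c m" for m
  proof -
    have b: "cmod (fc w m - c m) \<le> sqrt (L - P n)" if "n \<ge> nat \<bar>m\<bar>" for n
    proof -
      have "m \<in> IN n" using that by auto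
      then have "fc w m - c m = fc (\<lambda>t. w t - psum c n t) m"
        using Lw by (simp add: fc_diff fc_psum)
      also have "cmod \<dots> \<le> sqrt (n2 (\<lambda>t. w t - psum c n t))"
        by (rule fc_bound) (use Lw in \<open>auto intro: L2_diff\<close>)
      also have "\<dots> \<le> sqrt (L - P n)" using main[of n] by simp
      finally show ?thesis .
    qed
    have "(\<lambda>n. sqrt (L - P n)) \<longlonglongrightarrow> sqrt 0"
      by (rule tendsto_real_sqrt[OF lim0])
    then have "cmod (fc w m - c m) \<le> 0"
      using b by (intro LIMSEQ_le_const[of "\<lambda>n. sqrt (L - P n)"]) auto
    then show ?thesis by simp
  qed
  show ?thesis using that[OF Lw fcw conv] .
qed



section \<open>Trigonometric polynomials\<close>

inductive trig :: "(real \<Rightarrow> complex) \<Rightarrow> bool" where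
  trig_en: "trig (\<lambda>t. c * en n t)"
| trig_add: "trig p \<Longrightarrow> trig q \<Longrightarrow> trig (\<lambda>t. p t + q t)"

lemma trig_cmult: "trig p \<Longrightarrow> trig (\<lambda>t. a * p t)"
proof (induction rule: trig.induct)
  case (trig_en c n)
  then show ?case using trig.trig_en[of "a * c" n] by (simp add: mult.assoc)
next
  case (trig_add p q)
  then show ?case using trig.trig_add by (simp add: distrib_left)
qed

lemma trig_const: "trig (\<lambda>t. c)"
  using trig_en[of c 0] by simp

lemma trig_mult_en: "trig p \<Longrightarrow> trig (\<lambda>t. p t * (d * en m t))"
proof (induction rule: trig.induct)
  case (trig_en c n)
  have "(\<lambda>t. c * en n t * (d * en m t)) = (\<lambda>t. (c * d) * en (n + m) t)"
    by (rule ext) (simp add: en_mult[symmetric] mult_ac)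
  then show ?case using trig.trig_en by simp
next
  case (trig_add p q)
  then show ?case using trig.trig_add by (simp add: distrib_right)
qed

lemma trig_mult: assumes "trig p" "trig q" shows "trig (\<lambda>t. p t * q t)"
  using assms(2)
proof (induction rule: trig.induct)
  case (trig_en c n)
  then show ?case by (rule trig_mult_en[OF assms(1)])
next
  case (trig_add q1 q2)
  then show ?case using trig.trig_add by (simp add: distrib_left)
qed

lemma trig_cont: "trig p \<Longrightarrow> continuous_on A p"
  by (induction rule: trig.induct) (auto intro!: continuous_intros cont_en[unfolded en_def] simp: en_def)

lemma trig_meas: "trig p \<Longrightarrow> p \<in> borel_measurable circ"
  by (rule continuous_imp_measurable_on_sets_lebesgue[OF trig_cont]) auto

lemma trig_integrable: "trig p \<Longrightarrow> integrable circ p"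
  by (rule continuous_imp_integrable_real[OF trig_cont])

lemma trig_bounded: "trig p \<Longrightarrow> \<exists>B. \<forall>t. cmod (p t) \<le> B"
proof (induction rule: trig.induct)
  case (trig_en c n)
  then show ?case by (intro exI[of _ "cmod c"]) (simp add: norm_mult)
next
  case (trig_add p q)
  then obtain B1 B2 where "\<forall>t. cmod (p t) \<le> B1" "\<forall>t. cmod (q t) \<le> B2" by blast
  then show ?case by (intro exI[of _ "B1 + B2"]) (auto intro: norm_triangle_le add_mono)
qed

lemma cos_trig: "trig (\<lambda>t. complex_of_real (cos t))"
proof -
  have eq: "(\<lambda>t. complex_of_real (cos t)) = (\<lambda>t. (1/2) * en 1 t + (1/2) * en (-1) t)"
  proof (rule ext)
    fix t
    have "complex_of_real (cos t) = cos (complex_of_real t)" by (simp add: cos_of_real)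
    also have "\<dots> = (exp (\<i> * complex_of_real t) + exp (- (\<i> * complex_of_real t))) / 2"
      by (simp add: cos_exp_eq)
    also have "\<dots> = (1/2) * en 1 t + (1/2) * en (-1) t"
      unfolding en_def by simp
    finally show "complex_of_real (cos t) = (1/2) * en 1 t + (1/2) * en (-1) t" .
  qed
  show ?thesis unfolding eq by (intro trig.intros)
qed

lemma sin_trig: "trig (\<lambda>t. complex_of_real (sin t))"
proof -
  have eq: "(\<lambda>t. complex_of_real (sin t)) = (\<lambda>t. (-\<i>/2) * en 1 t + (\<i>/2) * en (-1) t)"
  proof (rule ext)
    fix t
    have "complex_of_real (sin t) = sin (complex_of_real t)" by (simp add: sin_of_real)
    also have "\<dots> = (exp (\<i> * complex_of_real t) - exp (- (\<i> * complex_of_real t))) / (2 * \<i>)"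
      by (simp add: sin_exp_eq)
    also have "\<dots> = (-\<i>/2) * en 1 t + (\<i>/2) * en (-1) t"
      unfolding en_def by (simp add: field_simps)
    finally show "complex_of_real (sin t) = (-\<i>/2) * en 1 t + (\<i>/2) * en (-1) t" .
  qed
  show ?thesis unfolding eq by (intro trig.intros)
qed

lemma trig_orth:
  assumes u: "integrable circ u" and fc0: "\<And>n. integral\<^sup>L circ (\<lambda>t. u t * en n t) = 0"
  shows "trig p \<Longrightarrow> integral\<^sup>L circ (\<lambda>t. u t * p t) = 0"
proof (induction rule: trig.induct)
  case (trig_en c n)
  have "integral\<^sup>L circ (\<lambda>t. u t * (c * en n t)) = c * integral\<^sup>L circ (\<lambda>t. u t * en n t)"
    by (simp add: mult_ac)
  then show ?case using fc0 by simp
next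
  case (trig_add p q)
  have ip: "integrable circ (\<lambda>t. u t * p t)" if tp: "trig p" for p
  proof -
    obtain B where B: "\<forall>t. cmod (p t) \<le> B" using trig_bounded[OF tp] by blast
    show ?thesis
    proof (rule Bochner_Integration.integrable_bound)
      show "integrable circ (\<lambda>t. B * cmod (u t))" using u by simp
      show "(\<lambda>t. u t * p t) \<in> borel_measurable circ"
        using borel_measurable_integrable[OF u] trig_meas[OF tp] by measurable
      show "AE x in circ. norm (u x * p x) \<le> norm (B * cmod (u x))"
      proof (rule AE_I2)
        fix x
        have "cmod (u x * p x) \<le> B * cmod (u x)"
          using B mult_right_mono[of "cmod (p x)" B "cmod (u x)"] by (simp add: norm_mult mult.commute)
        then show "norm (u x * p x) \<le> norm (B * cmod (u x))" by simp
      qed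
    qed
  qed
  have "integral\<^sup>L circ (\<lambda>t. u t * (p t + q t)) = integral\<^sup>L circ (\<lambda>t. u t * p t) + integral\<^sup>L circ (\<lambda>t. u t * q t)"
    using ip[OF trig_add(1)] ip[OF trig_add(2)] by (simp add: distrib_left)
  then show ?case using trig_add by simp
qed


section \<open>Stone-Weierstrass on the circle\<close>

lemma cos_lt_1: assumes "0 < x" "x < 2*pi" shows "cos x < 1"
proof (cases "x \<le> pi")
  case True
  then show ?thesis using cos_monotone_0_pi[of 0 x] assms by simp
next
  case False
  then have "cos (2*pi - x) < cos 0" using assms by (intro cos_monotone_0_pi) auto
  then show ?thesis by simp
qed

lemma cos_le_max:
  assumes "0 < a" "a < b" "b < 2*pi" "a < th" "th < b"
  shows "cos th \<le> max (cos a) (cos b)"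
proof (cases "th \<le> pi")
  case True
  then have "cos th \<le> cos a" using assms by (intro cos_monotone_0_pi_le) auto
  then show ?thesis by simp
next
  case False
  then have "cos (2*pi - th) \<le> cos (2*pi - b)" using assms by (intro cos_monotone_0_pi_le) auto
  then show ?thesis by simp
qed

lemma sphere_cis_Arg: assumes "z \<in> sphere (0::complex) 1" shows "z = cis (Arg (-z) + pi)"
proof -
  have nz: "cmod z = 1" using assms by simp
  then have "-z \<noteq> 0" by auto
  then have "cis (Arg (-z)) = sgn (-z)" by (rule cis_Arg)
  also have "\<dots> = -z" using nz by (simp add: sgn_eq)
  finally have "cis (Arg (-z) + pi) = -z * cis pi" by (simp add: cis_mult[symmetric])
  then show ?thesis by simp
qed

lemma circle_fun:
  fixes \<psi> :: "real \<Rightarrow> real"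
  assumes cont: "continuous_on UNIV \<psi>" and ab: "0 < a" "a < b" "b < 2*pi"
    and zero: "\<And>t. t \<le> a \<or> t \<ge> b \<Longrightarrow> \<psi> t = 0"
  shows "continuous_on (sphere 0 1) (\<lambda>z. \<psi> (Arg (-z) + pi))"
    "\<And>t. t \<in> {0..2*pi} \<Longrightarrow> \<psi> (Arg (- cis t) + pi) = \<psi> t"
proof -
  define f where "f \<equiv> (\<lambda>z. \<psi> (Arg (-z) + pi))"
  define c where "c = max (cos a) (cos b)"
  have c1: "c < 1" unfolding c_def using cos_lt_1[of a] cos_lt_1[of b] ab by simp
  let ?S = "sphere (0::complex) 1"
  define S1 where "S1 = ?S \<inter> {z. Re z < 1}"
  define S2 where "S2 = ?S \<inter> {z. c < Re z}"
  have f0: "f z = 0" if "z \<in> S2" for z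
  proof -
    have zS: "z \<in> ?S" and zc: "c < Re z" using that by (auto simp: S2_def)
    define th where "th = Arg (-z) + pi"
    have "z = cis th" unfolding th_def by (rule sphere_cis_Arg[OF zS])
    then have Rez: "Re z = cos th" by simp
    have "th \<le> a \<or> th \<ge> b"
    proof (rule ccontr)
      assume "\<not> (th \<le> a \<or> th \<ge> b)"
      then have "a < th" "th < b" by auto
      then have "cos th \<le> c" unfolding c_def using cos_le_max ab by blast
      then show False using zc Rez by simp
    qed
    then show ?thesis unfolding f_def th_def[symmetric] using zero by blast
  qed
  have U: "S1 \<union> S2 = ?S"
  proof
    show "S1 \<union> S2 \<subseteq> ?S" by (auto simp: S1_def S2_def)
    show "?S \<subseteq> S1 \<union> S2"
    proof
      fix z assume "z \<in> ?S"
      then show "z \<in> S1 \<union> S2" using c1 by (cases "Re z < 1") (auto simp: S1_def S2_def)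
    qed
  qed
  have c1': "continuous_on S1 f"
  proof -
    have nn: "- z \<notin> \<real>\<^sub>\<le>\<^sub>0" if "z \<in> S1" for z
    proof
      assume "- z \<in> \<real>\<^sub>\<le>\<^sub>0"
      then have "Im z = 0" "Re z \<ge> 0" by (auto simp: complex_nonpos_Reals_iff)
      moreover have "cmod z = 1" "Re z < 1" using that by (auto simp: S1_def)
      ultimately show False by (simp add: cmod_def)
    qed
    show ?thesis unfolding f_def
      by (intro continuous_on_compose2[OF cont _ subset_UNIV] continuous_intros) (use nn in auto)
  qed
  have c2': "continuous_on S2 f"
    by (rule continuous_on_eq[OF continuous_on_const[of S2 0]]) (use f0 in auto)
  have "continuous_on (S1 \<union> S2) (\<lambda>x. if c < Re x then f x else f x)"
  proof (rule continuous_on_cases_local_open)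
    have "openin (top_of_set ?S) S1"
      unfolding S1_def by (intro openin_open_Int open_halfspace_Re_lt)
    then show "openin (top_of_set (S1 \<union> S2)) S1" by (simp only: U)
    have "openin (top_of_set ?S) S2"
      unfolding S2_def by (intro openin_open_Int open_halfspace_Re_gt)
    then show "openin (top_of_set (S1 \<union> S2)) S2" by (simp only: U)
  qed (use c1' c2' in auto)
  then show "continuous_on ?S (\<lambda>z. \<psi> (Arg (-z) + pi))" using U unfolding f_def by simp
  fix t assume t: "t \<in> {0..2*pi}"
  show "\<psi> (Arg (- cis t) + pi) = \<psi> t"
  proof (cases "t = 0")
    case True
    have "Arg (- cis t) = pi" using True Arg_cis[of pi] by simp
    then show ?thesis using True zero ab by simp
  next
    case False
    then have t': "t - pi \<in> {-pi<..pi}" using t by auto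
    have "- cis t = cis (t - pi)" by (simp add: complex_eq_iff cos_diff sin_diff)
    then have "Arg (- cis t) = t - pi" using Arg_cis[OF t'] by simp
    then show ?thesis by simp
  qed
qed

lemma sw_step:
  fixes \<psi> :: "real \<Rightarrow> real"
  assumes cont: "continuous_on UNIV \<psi>" and ab: "0 < a" "a < b" "b < 2*pi"
    and zero: "\<And>t. t \<le> a \<or> t \<ge> b \<Longrightarrow> \<psi> t = 0"
    and e: "e > 0"
  obtains p where "trig p" "\<And>t. t \<in> {0..2*pi} \<Longrightarrow> cmod (complex_of_real (\<psi> t) - p t) < e"
proof -
  define f where "f \<equiv> (\<lambda>z. \<psi> (Arg (-z) + pi))"
  have cf1: "continuous_on (sphere 0 1) f"
    unfolding f_def by (rule circle_fun(1)[of \<psi> a b]) (use cont ab zero in auto)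
  have cf2: "f (cis t) = \<psi> t" if "t \<in> {0..2*pi}" for t
    unfolding f_def by (rule circle_fun(2)[of \<psi> a b]) (use cont ab zero that in auto)
  define P where "P g \<longleftrightarrow> continuous_on (sphere 0 1) g \<and> (\<exists>p. trig p \<and> (\<forall>t. complex_of_real (g (cis t)) = p t))"
    for g :: "complex \<Rightarrow> real"
  have "\<exists>g. P g \<and> (\<forall>x \<in> sphere 0 1. \<bar>f x - g x\<bar> < e)"
  proof (rule Stone_Weierstrass_HOL[of "sphere 0 1" P f e])
    show "compact (sphere (0::complex) 1)" by simp
    show "P (\<lambda>x. c)" for c unfolding P_def using trig_const[of "complex_of_real c"] by auto
    show "continuous_on (sphere 0 1) g" if "P g" for g using that unfolding P_def by blast
    show "P (\<lambda>x. g x + h x)" if "P g \<and> P h" for g h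
    proof -
      from that obtain p q where "trig p" "trig q" "\<forall>t. complex_of_real (g (cis t)) = p t"
        "\<forall>t. complex_of_real (h (cis t)) = q t" "continuous_on (sphere 0 1) g" "continuous_on (sphere 0 1) h"
        unfolding P_def by blast
      then show ?thesis unfolding P_def
        by (intro conjI continuous_on_add exI[of _ "\<lambda>t. p t + q t"]) (auto intro: trig_add)
    qed
    show "P (\<lambda>x. g x * h x)" if "P g \<and> P h" for g h
    proof -
      from that obtain p q where "trig p" "trig q" "\<forall>t. complex_of_real (g (cis t)) = p t"
        "\<forall>t. complex_of_real (h (cis t)) = q t" "continuous_on (sphere 0 1) g" "continuous_on (sphere 0 1) h"
        unfolding P_def by blast
      then show ?thesis unfolding P_def
        by (intro conjI continuous_on_mult exI[of _ "\<lambda>t. p t * q t"]) (auto intro: trig_mult)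
    qed
    show "\<exists>g. P g \<and> g x \<noteq> g y" if "x \<in> sphere 0 1 \<and> y \<in> sphere 0 1 \<and> x \<noteq> y" for x y
    proof (cases "Re x = Re y")
      case False
      have "P Re" unfolding P_def
        using cos_trig by (auto intro!: continuous_intros)
      then show ?thesis using False by blast
    next
      case True
      then have "Im x \<noteq> Im y" using that complex_eqI by blast
      have "P Im" unfolding P_def
        using sin_trig by (auto intro!: continuous_intros)
      then show ?thesis using \<open>Im x \<noteq> Im y\<close> by blast
    qed
  qed (use cf1 e in auto)
  then obtain g where g: "P g" "\<And>x. x \<in> sphere 0 1 \<Longrightarrow> \<bar>f x - g x\<bar> < e" by blast
  then obtain p where p: "trig p" "\<And>t. complex_of_real (g (cis t)) = p t" unfolding P_def by blast
  show ?thesis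
  proof (rule that[OF p(1)])
    fix t assume t: "t \<in> {0..2*pi}"
    have "complex_of_real (\<psi> t) - p t = complex_of_real (f (cis t) - g (cis t))"
      using cf2[OF t] p(2)[of t] by simp
    also have "cmod \<dots> < e" by (simp only: norm_of_real) (use g(2)[of "cis t"] in simp)
    finally show "cmod (complex_of_real (\<psi> t) - p t) < e" .
  qed
qed



section \<open>Uniqueness of Fourier coefficients\<close>

lemma cont_orth:
  assumes u: "integrable circ u" and fc0: "\<And>n. integral\<^sup>L circ (\<lambda>t. u t * en n t) = 0"
    and cont: "continuous_on UNIV \<psi>" and ab: "0 < a" "a < b" "b < 2*pi"
    and zero: "\<And>t. t \<le> a \<or> t \<ge> b \<Longrightarrow> \<psi> t = 0"
  shows "integral\<^sup>L circ (\<lambda>t. u t * complex_of_real (\<psi> t)) = 0"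
proof -
  let ?X = "integral\<^sup>L circ (\<lambda>t. u t * complex_of_real (\<psi> t))"
  let ?C = "integral\<^sup>L circ (\<lambda>t. cmod (u t))"
  have um: "u \<in> borel_measurable circ" using u by (rule borel_measurable_integrable)
  have cont': "continuous_on {0..2*pi} \<psi>" using cont by (rule continuous_on_subset) simp
  have psim: "\<psi> \<in> borel_measurable circ"
    by (rule continuous_imp_measurable_on_sets_lebesgue[OF cont']) auto
  have "compact (\<psi> ` {0..2*pi})" by (rule compact_continuous_image[OF cont']) simp
  then obtain B where B: "\<And>t. t \<in> {0..2*pi} \<Longrightarrow> \<bar>\<psi> t\<bar> \<le> B"
    using compact_imp_bounded bounded_iff by (metis image_eqI real_norm_def)
  have intpsi: "integrable circ (\<lambda>t. u t * complex_of_real (\<psi> t))"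
  proof (rule Bochner_Integration.integrable_bound)
    show "integrable circ (\<lambda>t. B * cmod (u t))" using u by simp
    show "(\<lambda>t. u t * complex_of_real (\<psi> t)) \<in> borel_measurable circ" using um psim by measurable
    show "AE x in circ. norm (u x * complex_of_real (\<psi> x)) \<le> norm (B * cmod (u x))"
    proof (rule AE_I2)
      fix x assume "x \<in> space circ"
      then have "\<bar>\<psi> x\<bar> \<le> B" using B by simp
      then have "cmod (u x) * \<bar>\<psi> x\<bar> \<le> cmod (u x) * B" by (simp add: mult_left_mono)
      then show "norm (u x * complex_of_real (\<psi> x)) \<le> norm (B * cmod (u x))"
        by (simp add: norm_mult mult.commute)
    qed
  qed
  have bound: "cmod ?X \<le> e * ?C" if e: "e > 0" for e
  proof -
    obtain p where p: "trig p" "\<And>t. t \<in> {0..2*pi} \<Longrightarrow> cmod (complex_of_real (\<psi> t) - p t) < e"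
      using sw_step[OF cont ab zero e] by blast
    have up0: "integral\<^sup>L circ (\<lambda>t. u t * p t) = 0" by (rule trig_orth[OF u fc0 p(1)])
    have intp: "integrable circ (\<lambda>t. u t * p t)"
    proof -
      obtain Bp where Bp: "\<forall>t. cmod (p t) \<le> Bp" using trig_bounded[OF p(1)] by blast
      show ?thesis
      proof (rule Bochner_Integration.integrable_bound)
        show "integrable circ (\<lambda>t. Bp * cmod (u t))" using u by simp
        show "(\<lambda>t. u t * p t) \<in> borel_measurable circ" using um trig_meas[OF p(1)] by measurable
        show "AE x in circ. norm (u x * p x) \<le> norm (Bp * cmod (u x))"
        proof (rule AE_I2)
          fix x
          have "cmod (u x) * cmod (p x) \<le> cmod (u x) * Bp" using Bp by (simp add: mult_left_mono)
          then show "norm (u x * p x) \<le> norm (Bp * cmod (u x))"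
            by (simp add: norm_mult mult.commute)
        qed
      qed
    qed
    have "?X = ?X - integral\<^sup>L circ (\<lambda>t. u t * p t)" using up0 by simp
    also have "\<dots> = integral\<^sup>L circ (\<lambda>t. u t * (complex_of_real (\<psi> t) - p t))"
      using intpsi intp by (simp add: right_diff_distrib)
    finally have X: "?X = integral\<^sup>L circ (\<lambda>t. u t * (complex_of_real (\<psi> t) - p t))" .
    have "cmod ?X \<le> integral\<^sup>L circ (\<lambda>t. norm (u t * (complex_of_real (\<psi> t) - p t)))"
      unfolding X by (rule integral_norm_bound)
    also have "\<dots> \<le> integral\<^sup>L circ (\<lambda>t. e * cmod (u t))"
    proof (rule integral_mono)
      show "integrable circ (\<lambda>t. norm (u t * (complex_of_real (\<psi> t) - p t)))"
        using Bochner_Integration.integrable_diff[OF intpsi intp] by (simp add: right_diff_distrib)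
      show "integrable circ (\<lambda>t. e * cmod (u t))" using u by simp
      fix t assume "t \<in> space circ"
      then have "cmod (complex_of_real (\<psi> t) - p t) \<le> e" using p(2)[of t] by simp
      then have "cmod (u t) * cmod (complex_of_real (\<psi> t) - p t) \<le> cmod (u t) * e" by (simp add: mult_left_mono)
      then show "norm (u t * (complex_of_real (\<psi> t) - p t)) \<le> e * cmod (u t)"
        by (simp add: norm_mult mult.commute)
    qed
    also have "\<dots> = e * ?C" by simp
    finally show ?thesis .
  qed
  have C0: "?C \<ge> 0" by (auto intro!: integral_nonneg_AE)
  show "?X = 0"
  proof (rule ccontr)
    assume "?X \<noteq> 0"
    then have pos: "cmod ?X > 0" by simp
    define e where "e = cmod ?X / (?C + 1)"
    have e: "e > 0" unfolding e_def by (intro divide_pos_pos pos) (use C0 in linarith)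
    have "cmod ?X \<le> e * ?C" by (rule bound[OF e])
    also have "\<dots> < cmod ?X"
    proof -
      have "e * ?C = cmod ?X * (?C / (?C + 1))" by (simp add: e_def)
      also have "\<dots> < cmod ?X * 1"
      proof (rule mult_strict_left_mono[OF _ pos])
        have "?C + 1 > 0" using C0 by linarith
        then show "?C / (?C + 1) < 1" by (simp add: divide_less_eq)
      qed
      finally show ?thesis by simp
    qed
    finally show False by simp
  qed
qed


definition bump :: "real \<Rightarrow> real \<Rightarrow> nat \<Rightarrow> real \<Rightarrow> real" where
  "bump a b k t = min 1 (real (Suc k) * max 0 (min (t - a) (b - t)))"

lemma bump_cont: "continuous_on UNIV (bump a b k)"
  unfolding bump_def by (intro continuous_intros)

lemma bump_zero: assumes "t \<le> a \<or> t \<ge> b" shows "bump a b k t = 0"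
proof -
  have "min (t - a) (b - t) \<le> 0" using assms by auto
  then have "max 0 (min (t - a) (b - t)) = 0" by (rule max_absorb1)
  then show ?thesis unfolding bump_def by simp
qed

lemma bump_bound: "\<bar>bump a b k t\<bar> \<le> 1"
proof -
  have *: "\<bar>min 1 y\<bar> \<le> 1" if "0 \<le> y" for y :: real using that by (simp add: min_def)
  have "0 \<le> real (Suc k) * max 0 (min (t - a) (b - t))" by simp
  then show ?thesis unfolding bump_def by (rule *)
qed

lemma id_meas_circ[measurable]: "(\<lambda>x. x) \<in> borel_measurable circ"
  by (rule continuous_imp_measurable_on_sets_lebesgue) (auto intro: continuous_intros)

lemma bump_lim: "(\<lambda>k. bump a b k t) \<longlonglongrightarrow> indicator {a<..<b} t"
proof (cases "a < t \<and> t < b")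
  case True
  define m where "m = min (t - a) (b - t)"
  have m: "m > 0" using True by (simp add: m_def)
  obtain K :: nat where K: "1 / m < real K" using reals_Archimedean2 by blast
  have "eventually (\<lambda>k. bump a b k t = 1) sequentially"
  proof (rule eventually_sequentiallyI[of K])
    fix k assume "K \<le> k"
    then have "1 / m < real (Suc k)" using K by linarith
    then have "1 \<le> real (Suc k) * m" using m by (simp add: field_simps)
    then show "bump a b k t = 1" unfolding bump_def m_def[symmetric] using m by (simp add: max_def)
  qed
  then have "(\<lambda>k. bump a b k t) \<longlonglongrightarrow> 1" by (rule tendsto_eventually)
  then show ?thesis using True by simp
next
  case False
  then have "bump a b k t = 0" for k by (intro bump_zero) auto
  then show ?thesis using False by simp
qed

lemma interval_orth:
  assumes u: "integrable circ u" and fc0: "\<And>n. integral\<^sup>L circ (\<lambda>t. u t * en n t) = 0"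
    and ab: "0 < a" "a < b" "b < 2*pi"
  shows "integral\<^sup>L circ (\<lambda>t. u t * complex_of_real (indicator {a<..<b} t)) = 0"
proof -
  have um: "u \<in> borel_measurable circ" using u by (rule borel_measurable_integrable)
  have bm: "bump a b k \<in> borel_measurable circ" for k
    by (rule continuous_imp_measurable_on_sets_lebesgue[OF continuous_on_subset[OF bump_cont]]) auto
  have "(\<lambda>k. integral\<^sup>L circ (\<lambda>t. u t * complex_of_real (bump a b k t))) \<longlonglongrightarrow>
        integral\<^sup>L circ (\<lambda>t. u t * complex_of_real (indicator {a<..<b} t))"
  proof (rule integral_dominated_convergence)
    show "(\<lambda>t. u t * complex_of_real (indicator {a<..<b} t)) \<in> borel_measurable circ"
      using um by measurable
    show "(\<lambda>t. u t * complex_of_real (bump a b k t)) \<in> borel_measurable circ" for k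
      using um bm by measurable
    show "integrable circ (\<lambda>t. cmod (u t))" using u by simp
    show "AE x in circ. (\<lambda>k. u x * complex_of_real (bump a b k x)) \<longlonglongrightarrow> u x * complex_of_real (indicator {a<..<b} x)"
      by (rule AE_I2) (intro tendsto_mult tendsto_const tendsto_of_real bump_lim)
    show "AE x in circ. norm (u x * complex_of_real (bump a b k x)) \<le> cmod (u x)" for k
    proof (rule AE_I2)
      fix x
      have "cmod (u x) * \<bar>bump a b k x\<bar> \<le> cmod (u x) * 1" by (rule mult_left_mono[OF bump_bound]) simp
      then show "norm (u x * complex_of_real (bump a b k x)) \<le> cmod (u x)" by (simp add: norm_mult)
    qed
  qed
  moreover have "integral\<^sup>L circ (\<lambda>t. u t * complex_of_real (bump a b k t)) = 0" for k
    by (rule cont_orth[OF u fc0 bump_cont ab bump_zero])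
  ultimately show ?thesis by (simp add: LIMSEQ_const_iff)
qed

theorem fc_unique:
  assumes u: "integrable circ u" and fc0: "\<And>n. integral\<^sup>L circ (\<lambda>t. u t * en n t) = 0"
  shows "AE t in circ. u t = 0"
proof -
  define F where "F t = (if t \<in> {0..2*pi} then u t else 0)" for t
  have intF: "integrable lebesgue F"
    unfolding F_def using u by (subst Lebesgue_Measure.integrable_restrict_UNIV) auto
  have Fint: "F integrable_on cbox a b" for a b
    using integrable_on_lebesgue[OF intF] integrable_on_subcbox by blast
  obtain N where N: "negligible N"
    "\<And>x e. \<lbrakk>x \<notin> N; 0 < e\<rbrakk> \<Longrightarrow> \<exists>d>0. \<forall>h. 0 < h \<and> h < d \<longrightarrow>
        norm (integral (cbox x (x + h *\<^sub>R One)) F /\<^sub>R h ^ DIM(real) - F x) < e"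
    using integrable_ccontinuous_explicit[of F] Fint by blast
  have int0: "integral (cbox x (x + h)) F = 0" if xh: "0 < x" "0 < h" "x + h < 2*pi" for x h
  proof -
    have si: "set_integrable lebesgue {x<..<x+h} F"
      unfolding set_integrable_def by (rule integrable_mult_indicator[OF _ intF]) simp
    have "set_lebesgue_integral lebesgue {x<..<x+h} F = integral\<^sup>L lebesgue (\<lambda>t. if t \<in> {0..2*pi} then u t * complex_of_real (indicator {x<..<x+h} t) else 0)"
      unfolding set_lebesgue_integral_def F_def
      by (intro Bochner_Integration.integral_cong) (auto simp: indicator_def)
    also have "\<dots> = integral\<^sup>L circ (\<lambda>t. u t * complex_of_real (indicator {x<..<x+h} t))"
      by (rule Lebesgue_Measure.integral_restrict_UNIV) simp
    also have "\<dots> = 0" by (rule interval_orth[OF u fc0]) (use xh in auto)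
    finally have "set_lebesgue_integral lebesgue {x<..<x+h} F = 0" .
    then have H: "(F has_integral 0) {x<..<x+h}" using has_integral_set_lebesgue[OF si] by simp
    have "(F has_integral 0) (cbox x (x+h))"
      by (subst has_integral_open_interval[symmetric]) (use H in simp)
    then show ?thesis by (rule integral_unique)
  qed
  have zero: "u x = 0" if x: "x \<notin> N" "0 < x" "x < 2*pi" for x
  proof -
    have small: "cmod (F x) < e" if e: "e > 0" for e
    proof -
      obtain d where d: "d > 0" "\<And>h. 0 < h \<and> h < d \<Longrightarrow> norm (integral (cbox x (x + h *\<^sub>R One)) F /\<^sub>R h ^ DIM(real) - F x) < e"
        using N(2)[OF x(1) e] by blast
      define mu where "mu = min d (2*pi - x)"
      define h where "h = mu / 2"
      have m: "0 < mu" "mu \<le> d" "mu \<le> 2*pi - x"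
        using d x by (auto simp: mu_def)
      have h1: "0 < h" unfolding h_def using m by linarith
      have h2: "h < d" unfolding h_def using m by linarith
      have h3: "x + h < 2*pi" unfolding h_def using m by linarith
      note h = h1 h2 h3
      have "norm (integral (cbox x (x + h *\<^sub>R One)) F /\<^sub>R h ^ DIM(real) - F x) < e"
        using d(2) h by blast
      moreover have "integral (cbox x (x + h *\<^sub>R One)) F = 0" using int0[OF x(2) h(1) h(3)] by simp
      ultimately show ?thesis by simp
    qed
    have "F x = 0"
    proof (rule ccontr)
      assume "F x \<noteq> 0"
      then have "cmod (F x) < cmod (F x)" using small[of "cmod (F x)"] by simp
      then show False by simp
    qed
    then show ?thesis using x by (simp add: F_def)
  qed
  have "negligible (N \<union> {0, 2*pi})" using N(1) by (simp add: negligible_Un negligible_insert)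
  then have "(N \<union> {0, 2*pi}) \<in> null_sets lebesgue" by (simp add: negligible_iff_null_sets)
  then have "AE x in lebesgue. x \<notin> N \<union> {0, 2*pi}" by (rule AE_not_in)
  then have "AE x in lebesgue. x \<in> {0..2*pi} \<longrightarrow> u x = 0"
    by eventually_elim (use zero in auto)
  then show ?thesis by (subst AE_restrict_space_iff) auto
qed



section \<open>Parseval\<close>

lemma fc_zero_ae:
  assumes u: "L2 u" and z: "\<And>n. fc u n = 0"
  shows "AE t in circ. u t = 0"
proof (rule fc_unique)
  show "integrable circ u" using u by (rule L2_integrable)
  fix n
  have "fc u (-n) = complex_of_real (1 / (2*pi)) * integral\<^sup>L circ (\<lambda>t. u t * en n t)"
    unfolding fc_def ip_def by (simp add: cnj_en)
  then show "integral\<^sup>L circ (\<lambda>t. u t * en n t) = 0" using z[of "-n"] by simp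
qed

lemma parseval_norm:
  assumes f: "L2 f"
  shows "(\<lambda>N. n2 (\<lambda>t. f t - psum (fc f) N t)) \<longlonglongrightarrow> 0"
proof -
  obtain w where w: "L2 w" "\<And>n. fc w n = fc f n" "(\<lambda>N. n2 (\<lambda>t. w t - psum (fc f) N t)) \<longlonglongrightarrow> 0"
    using riesz_fischer[OF sq_summable_bessel[OF f]] by blast
  have "AE t in circ. f t - w t = 0"
    by (rule fc_zero_ae) (use f w in \<open>auto intro: L2_diff simp: fc_diff\<close>)
  then have ae: "AE t in circ. f t = w t" by simp
  have "n2 (\<lambda>t. f t - psum (fc f) N t) = n2 (\<lambda>t. w t - psum (fc f) N t)" for N
  proof -
    have m: "f \<in> borel_measurable circ" "w \<in> borel_measurable circ" "psum (fc f) N \<in> borel_measurable circ"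
      using f w(1) by (auto intro: L2_meas)
    have "integral\<^sup>L circ (\<lambda>t. (cmod (f t - psum (fc f) N t))\<^sup>2) = integral\<^sup>L circ (\<lambda>t. (cmod (w t - psum (fc f) N t))\<^sup>2)"
    proof (rule integral_cong_AE)
      show "(\<lambda>t. (cmod (f t - psum (fc f) N t))\<^sup>2) \<in> borel_measurable circ" using m by measurable
      show "(\<lambda>t. (cmod (w t - psum (fc f) N t))\<^sup>2) \<in> borel_measurable circ" using m by measurable
      show "AE t in circ. (cmod (f t - psum (fc f) N t))\<^sup>2 = (cmod (w t - psum (fc f) N t))\<^sup>2"
        using ae by eventually_elim simp
    qed
    then show ?thesis unfolding n2_def by simp
  qed
  then show ?thesis using w(3) by simp
qed

lemma summable_prod_fc:
  assumes f: "L2 f" and g: "L2 g"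
  shows "(\<lambda>n. fc f n * cnj (fc g n)) summable_on UNIV"
proof (rule abs_summable_summable)
  have s: "(\<lambda>n. ((cmod (fc f n))\<^sup>2 + (cmod (fc g n))\<^sup>2) / 2) summable_on UNIV"
    using summable_on_cmult_left[OF summable_on_add[OF sq_summable_bessel[OF f] sq_summable_bessel[OF g]], of "1/2"]
    by simp
  show "(\<lambda>n. norm (fc f n * cnj (fc g n))) summable_on UNIV"
  proof (rule summable_on_comparison_test[OF s])
    fix n
    show "norm (fc f n * cnj (fc g n)) \<le> ((cmod (fc f n))\<^sup>2 + (cmod (fc g n))\<^sup>2) / 2"
      by (rule prod_le_sq)
    show "0 \<le> norm (fc f n * cnj (fc g n))" by simp
  qed
qed

theorem parseval:
  assumes f: "L2 f" and g: "L2 g"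
  shows "((\<lambda>n. fc f n * cnj (fc g n)) has_sum ip f g) UNIV"
proof (rule has_sum_from_IN[OF summable_prod_fc[OF f g]])
  have eq: "(\<Sum>n\<in>IN N. fc f n * cnj (fc g n)) = ip (psum (fc f) N) g" for N
    using g by (simp add: ip_psum_left ip_en_left)
  have bnd: "cmod (ip f g - ip (psum (fc f) N) g) \<le> sqrt (n2 (\<lambda>t. f t - psum (fc f) N t)) * sqrt (n2 g)" for N
  proof -
    have "ip f g - ip (psum (fc f) N) g = ip (\<lambda>t. f t - psum (fc f) N t) g"
      using f g by (simp add: ip_diff_left)
    also have "cmod \<dots> \<le> sqrt (n2 (\<lambda>t. f t - psum (fc f) N t)) * sqrt (n2 g)"
      by (rule cauchy_schwarz') (use f g in \<open>auto intro: L2_diff\<close>)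
    finally show ?thesis .
  qed
  have lim: "(\<lambda>N. sqrt (n2 (\<lambda>t. f t - psum (fc f) N t)) * sqrt (n2 g)) \<longlonglongrightarrow> 0"
  proof -
    have "(\<lambda>N. sqrt (n2 (\<lambda>t. f t - psum (fc f) N t))) \<longlonglongrightarrow> 0"
      using tendsto_real_sqrt[OF parseval_norm[OF f]] by simp
    from tendsto_mult[OF this tendsto_const[of "sqrt (n2 g)"]] show ?thesis by simp
  qed
  have d0: "(\<lambda>N. ip f g - ip (psum (fc f) N) g) \<longlonglongrightarrow> 0"
  proof (rule tendsto_0_le[OF lim, of _ 1])
    show "\<forall>\<^sub>F N in sequentially. norm (ip f g - ip (psum (fc f) N) g) \<le> norm (sqrt (n2 (\<lambda>t. f t - psum (fc f) N t)) * sqrt (n2 g)) * 1"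
    proof (intro always_eventually allI)
      fix N
      have "sqrt (n2 (\<lambda>t. f t - psum (fc f) N t)) * sqrt (n2 g) \<le> norm (sqrt (n2 (\<lambda>t. f t - psum (fc f) N t)) * sqrt (n2 g)) * 1"
        by (simp only: real_norm_def mult_1_right abs_ge_self)
      with bnd[of N] show "norm (ip f g - ip (psum (fc f) N) g) \<le> norm (sqrt (n2 (\<lambda>t. f t - psum (fc f) N t)) * sqrt (n2 g)) * 1"
        by linarith
    qed
  qed
  have "(\<lambda>N. ip (psum (fc f) N) g) \<longlonglongrightarrow> ip f g"
  proof -
    from tendsto_diff[OF tendsto_const[of "ip f g"] d0] show ?thesis by simp
  qed
  then show "(\<lambda>N. \<Sum>n\<in>IN N. fc f n * cnj (fc g n)) \<longlonglongrightarrow> ip f g"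
    by (simp add: eq)
qed

lemma has_sum_reindex_zero:
  assumes "inj h" "\<And>m. m \<notin> range h \<Longrightarrow> F m = 0"
  shows "(F has_sum s) UNIV \<longleftrightarrow> ((\<lambda>n. F (h n)) has_sum s) UNIV"
proof -
  have "(F has_sum s) UNIV \<longleftrightarrow> (F has_sum s) (range h)"
    by (rule has_sum_cong_neutral) (use assms(2) in auto)
  also have "\<dots> \<longleftrightarrow> ((F \<circ> h) has_sum s) UNIV"
    by (rule has_sum_reindex) (use assms(1) in auto)
  finally show ?thesis by (simp add: o_def)
qed

lemma summable_reindex_zero:
  assumes "inj h" "\<And>m. m \<notin> range h \<Longrightarrow> F m = 0"
  shows "F summable_on UNIV \<longleftrightarrow> (\<lambda>n. F (h n)) summable_on UNIV"
  using has_sum_reindex_zero[of h F, OF assms] unfolding summable_on_def by blast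



definition sig :: "int \<Rightarrow> int" where "sig m = (if 0 \<le> m then 2*m else -2*m - 1)"
definition sinv :: "int \<Rightarrow> int" where "sinv j = (if even j then j div 2 else - (j div 2) - 1)"

lemma sig_nonneg: "0 \<le> sig m" unfolding sig_def by auto

lemma sinv_sig[simp]: "sinv (sig m) = m"
proof (cases "0 \<le> m")
  case True
  then show ?thesis unfolding sig_def sinv_def by simp
next
  case False
  have "odd (-2*m - 1)" by presburger
  moreover have "(-2*m - 1) div 2 = -m - 1" by presburger
  ultimately show ?thesis using False unfolding sig_def sinv_def by simp
qed

lemma sig_sinv: "0 \<le> j \<Longrightarrow> sig (sinv j) = j"
  unfolding sig_def sinv_def by (cases "even j") (auto, presburger+)

lemma inj_sig: "inj sig"
  by (metis injI sinv_sig)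

lemma not_range_sig: "j \<notin> range sig \<Longrightarrow> j < 0"
  using sig_sinv by (metis linorder_not_le rangeI)

lemma inj_double: "inj (\<lambda>n::int. 2*n)"
  by (auto intro: injI)

lemma not_range_double: "m \<notin> range (\<lambda>n::int. 2*n) \<Longrightarrow> odd m"
  by (auto elim!: evenE)


lemma sq_summable_double:
  assumes "L2 f"
  shows "(\<lambda>n. (cmod (fc f (2*n)))\<^sup>2) summable_on UNIV"
proof -
  have "(\<lambda>m. (cmod (fc f m))\<^sup>2) summable_on range (\<lambda>n::int. 2*n)"
    by (rule summable_on_subset_banach[OF sq_summable_bessel[OF assms]]) simp
  then have "((\<lambda>m. (cmod (fc f m))\<^sup>2) \<circ> (\<lambda>n::int. 2*n)) summable_on UNIV"
    by (subst summable_on_reindex[symmetric]) (use inj_double in auto)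
  then show ?thesis by (simp add: o_def)
qed

theorem mainTheorem3:
  assumes "inner_fun \<phi>"
  shows "\<forall>g. H2 g \<longrightarrow> (\<exists>h. is_Vadj \<phi> g h) \<and> (\<forall>h. is_Vadj \<phi> g h \<longrightarrow> ip h h = ip g g)"
proof (intro allI impI)
  fix g assume gH: "H2 g"
  have phim: "\<phi> \<in> borel_measurable circ" and phi1: "AE t in circ. cmod (\<phi> t) = 1"
    using assms unfolding inner_fun_def by auto
  have phile: "AE t in circ. cmod (\<phi> t) \<le> 1" using phi1 by eventually_elim simp
  have cphile: "AE t in circ. cmod (cnj (\<phi> t)) \<le> 1" using phi1 by eventually_elim simp
  have Lphi: "L2 (\<lambda>t. \<phi> t * k t)" if "L2 k" for k
    by (rule L2_mult_bdd[OF that phim phile])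
  have Lcphi: "L2 (\<lambda>t. cnj (\<phi> t) * k t)" if "L2 k" for k
    by (rule L2_mult_bdd[OF that _ cphile]) (use phim in measurable)
  have gL: "L2 g" and gneg: "\<And>n. n < 0 \<Longrightarrow> fc g n = 0" using gH unfolding H2_def by auto
  define c where "c m = (if even m then fc g (m div 2) else 0)" for m
  have c2: "c (2*n) = fc g n" for n unfolding c_def by simp
  have codd: "c m = 0" if "m \<notin> range (\<lambda>n::int. 2*n)" for m
    using not_range_double[OF that] unfolding c_def by simp
  have csq: "(\<lambda>m. (cmod (c m))\<^sup>2) summable_on UNIV"
    by (subst summable_reindex_zero[OF inj_double]) (use codd sq_summable_bessel[OF gL] in \<open>auto simp: c2\<close>)
  obtain G where GL: "L2 G" and Gc: "\<And>m. fc G m = c m"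
    using riesz_fischer[OF csq] by blast
  define u where "u t = cnj (\<phi> t) * G t" for t
  have uL: "L2 u" unfolding u_def by (rule Lcphi[OF GL])
  define a where "a = fc u"
  define hc where "hc j = (if 0 \<le> j then a (sinv j) else 0)" for j
  have hcsig: "hc (sig m) = a m" for m unfolding hc_def using sig_nonneg by simp
  have hcneg: "hc j = 0" if "j \<notin> range sig" for j
    using not_range_sig[OF that] unfolding hc_def by simp
  have hcsq: "(\<lambda>j. (cmod (hc j))\<^sup>2) summable_on UNIV"
    by (subst summable_reindex_zero[OF inj_sig]) (use hcneg sq_summable_bessel[OF uL] in \<open>auto simp: hcsig a_def\<close>)
  obtain h where hL: "L2 h" and hc': "\<And>j. fc h j = hc j"
    using riesz_fischer[OF hcsq] by blast
  have hH: "H2 h" unfolding H2_def using hL hc' by (simp add: hc_def)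

  have adj: "ip v g = ip f h" if fH: "H2 f" and V: "is_V \<phi> f v" for f v
  proof -
    have fL: "L2 f" using fH unfolding H2_def by simp
    obtain k where K: "is_K f k" and W: "is_WP (\<lambda>t. \<phi> t * k t) v"
      using V unfolding is_V_def by blast
    have kL: "L2 k" and kc: "\<And>m. fc k m = (if m \<ge> 0 then fc f (2*m) else fc f (-2*m - 1))"
      using K unfolding is_K_def by auto
    have vL: "L2 v" and vc: "\<And>n. fc v n = (if n \<ge> 0 then fc (\<lambda>t. \<phi> t * k t) (2*n) else 0)"
      using W unfolding is_WP_def by auto
    have pkL: "L2 (\<lambda>t. \<phi> t * k t)" by (rule Lphi[OF kL])
    have P2: "((\<lambda>m. fc (\<lambda>t. \<phi> t * k t) m * cnj (fc G m)) has_sum ip (\<lambda>t. \<phi> t * k t) G) UNIV"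
      by (rule parseval[OF pkL GL])
    then have P2': "((\<lambda>n. fc (\<lambda>t. \<phi> t * k t) (2*n) * cnj (fc G (2*n))) has_sum ip (\<lambda>t. \<phi> t * k t) G) UNIV"
      by (subst (asm) has_sum_reindex_zero[OF inj_double]) (use codd Gc in auto)
    have P1: "((\<lambda>n. fc v n * cnj (fc g n)) has_sum ip v g) UNIV"
      by (rule parseval[OF vL gL])
    have "(\<lambda>n. fc (\<lambda>t. \<phi> t * k t) (2*n) * cnj (fc G (2*n))) = (\<lambda>n. fc v n * cnj (fc g n))"
    proof (rule ext)
      fix n show "fc (\<lambda>t. \<phi> t * k t) (2*n) * cnj (fc G (2*n)) = fc v n * cnj (fc g n)"
        using gneg[of n] by (cases "n \<ge> 0") (auto simp: vc Gc c2)
    qed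
    then have E1: "ip v g = ip (\<lambda>t. \<phi> t * k t) G"
      using P1 P2' has_sum_unique by metis
    have E2: "ip (\<lambda>t. \<phi> t * k t) G = ip k u"
      unfolding ip_def u_def by (simp add: mult_ac)
    have P3: "((\<lambda>m. fc k m * cnj (a m)) has_sum ip k u) UNIV"
      unfolding a_def by (rule parseval[OF kL uL])
    have P4: "((\<lambda>j. fc f j * cnj (fc h j)) has_sum ip f h) UNIV"
      by (rule parseval[OF fL hL])
    then have P4': "((\<lambda>m. fc f (sig m) * cnj (fc h (sig m))) has_sum ip f h) UNIV"
      by (subst (asm) has_sum_reindex_zero[OF inj_sig]) (use hcneg hc' in auto)
    have "(\<lambda>m. fc f (sig m) * cnj (fc h (sig m))) = (\<lambda>m. fc k m * cnj (a m))"
    proof (rule ext)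
      fix m
      have "fc f (sig m) = fc k m" by (simp add: kc sig_def)
      then show "fc f (sig m) * cnj (fc h (sig m)) = fc k m * cnj (a m)" by (simp add: hc' hcsig)
    qed
    then have E3: "ip k u = ip f h" using P3 P4' has_sum_unique by metis
    show ?thesis using E1 E2 E3 by simp
  qed
  have hadj: "is_Vadj \<phi> g h" unfolding is_Vadj_def using hH adj by blast

  have Nh: "ip h h = ip g g"
  proof -
    have Q1: "((\<lambda>j. fc h j * cnj (fc h j)) has_sum ip h h) UNIV" by (rule parseval[OF hL hL])
    then have Q1': "((\<lambda>m. fc h (sig m) * cnj (fc h (sig m))) has_sum ip h h) UNIV"
      by (subst (asm) has_sum_reindex_zero[OF inj_sig]) (use hcneg hc' in auto)
    have Q2: "((\<lambda>m. fc u m * cnj (fc u m)) has_sum ip u u) UNIV" by (rule parseval[OF uL uL])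
    have "(\<lambda>m. fc h (sig m) * cnj (fc h (sig m))) = (\<lambda>m. fc u m * cnj (fc u m))"
      by (rule ext) (simp add: hc' hcsig a_def)
    then have e1: "ip h h = ip u u" using Q1' Q2 has_sum_unique by metis
    have e2: "ip u u = ip G G"
    proof -
      have Gm: "G \<in> borel_measurable circ" using GL by (rule L2_meas)
      have "integral\<^sup>L circ (\<lambda>t. u t * cnj (u t)) = integral\<^sup>L circ (\<lambda>t. G t * cnj (G t))"
      proof (rule integral_cong_AE)
        show "(\<lambda>t. u t * cnj (u t)) \<in> borel_measurable circ" unfolding u_def using phim Gm by measurable
        show "(\<lambda>t. G t * cnj (G t)) \<in> borel_measurable circ" using Gm by measurable
        show "AE t in circ. u t * cnj (u t) = G t * cnj (G t)"
          using phi1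
        proof eventually_elim
          case (elim t)
          have "\<phi> t * cnj (\<phi> t) = 1"
            using elim complex_norm_square[of "\<phi> t"] by simp
          then have "u t * cnj (u t) = (\<phi> t * cnj (\<phi> t)) * (G t * cnj (G t))"
            unfolding u_def by (simp add: mult_ac)
          then show ?case using \<open>\<phi> t * cnj (\<phi> t) = 1\<close> by simp
        qed
      qed
      then show ?thesis unfolding ip_def by simp
    qed
    have Q3: "((\<lambda>m. fc G m * cnj (fc G m)) has_sum ip G G) UNIV" by (rule parseval[OF GL GL])
    then have Q3': "((\<lambda>n. fc G (2*n) * cnj (fc G (2*n))) has_sum ip G G) UNIV"
      by (subst (asm) has_sum_reindex_zero[OF inj_double]) (use codd Gc in auto)
    have Q4: "((\<lambda>n. fc g n * cnj (fc g n)) has_sum ip g g) UNIV" by (rule parseval[OF gL gL])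
    have "(\<lambda>n. fc G (2*n) * cnj (fc G (2*n))) = (\<lambda>n. fc g n * cnj (fc g n))"
      by (rule ext) (simp add: Gc c2)
    then have e3: "ip G G = ip g g" using Q3' Q4 has_sum_unique by metis
    show ?thesis using e1 e2 e3 by simp
  qed

  \<comment> \<open>Any adjoint has the same coefficients as h\<close>
  have uniq: "ip h' h' = ip g g" if h'adj: "is_Vadj \<phi> g h'" for h'
  proof -
    have h'H: "H2 h'" and adj': "\<And>f v. H2 f \<Longrightarrow> is_V \<phi> f v \<Longrightarrow> ip v g = ip f h'"
      using h'adj unfolding is_Vadj_def by auto
    have h'L: "L2 h'" using h'H unfolding H2_def by simp
    have same: "fc h' j = fc h j" for j
    proof (cases "0 \<le> j")
      case False
      then show ?thesis using h'H hH unfolding H2_def by simp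
    next
      case True
      define m where "m = sinv j"
      have sm: "sig m = j" unfolding m_def by (rule sig_sinv[OF True])
      have isK: "is_K (en j) (en m)"
        unfolding is_K_def
      proof (intro conjI allI)
        show "L2 (en m)" by simp
        fix m'
        have "(if m' \<ge> 0 then fc (en j) (2*m') else fc (en j) (-2*m' - 1)) = (if j = sig m' then 1 else 0)"
          by (simp add: fc_en sig_def)
        also have "(j = sig m') \<longleftrightarrow> (m = m')"
          using sm inj_sig by (metis injD)
        finally show "fc (en m) m' = (if m' \<ge> 0 then fc (en j) (2*m') else fc (en j) (-2*m' - 1))"
          by (simp add: fc_en)
      qed
      define pk0 where "pk0 t = \<phi> t * en m t" for t
      have pk0L: "L2 pk0" unfolding pk0_def by (rule Lphi) simp
      define d where "d n = (if n \<ge> 0 then fc pk0 (2*n) else 0)" for n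
      have dsq: "(\<lambda>n. (cmod (d n))\<^sup>2) summable_on UNIV"
      proof (rule summable_on_comparison_test[OF sq_summable_double[OF pk0L]])
        fix n
        show "(cmod (d n))\<^sup>2 \<le> (cmod (fc pk0 (2*n)))\<^sup>2" by (simp add: d_def)
        show "0 \<le> (cmod (d n))\<^sup>2" by simp
      qed
      obtain v0 where v0L: "L2 v0" and v0c: "\<And>n. fc v0 n = d n"
        using riesz_fischer[OF dsq] by blast
      have isV: "is_V \<phi> (en j) v0"
        unfolding is_V_def is_WP_def
        using isK v0L v0c unfolding pk0_def d_def by blast
      have enH: "H2 (en j)" unfolding H2_def using True by (auto simp: fc_en)
      have "ip (en j) h' = ip (en j) h"
        using adj'[OF enH isV] adj[OF enH isV] by simp
      then have "cnj (fc h' j) = cnj (fc h j)" by (simp add: ip_en_left)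
      then show ?thesis by simp
    qed
    have R1: "((\<lambda>j. fc h' j * cnj (fc h' j)) has_sum ip h' h') UNIV" by (rule parseval[OF h'L h'L])
    have R2: "((\<lambda>j. fc h j * cnj (fc h j)) has_sum ip h h) UNIV" by (rule parseval[OF hL hL])
    have "ip h' h' = ip h h" using R1 R2 same has_sum_unique by (metis (no_types, lifting) ext)
    then show ?thesis using Nh by simp
  qed
  show "(\<exists>h. is_Vadj \<phi> g h) \<and> (\<forall>h. is_Vadj \<phi> g h \<longrightarrow> ip h h = ip g g)"
    using hadj uniq by blast
qed


end
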